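(* Let $V\to W$ be a mutation of type $(j,k)\equiv(r-j,n-r-k)$ between configurations $V,W\in\mathbf{R}^{r\times n}$ in general position. Then $$f_W(x,y)-f_V(x,y)=\left(y^k-y^{n-r-k}\right)\left[(x+1)^{r-j}(x+y)^j-(x+1)^j(x+y)^{r-j}\right].$$
   Context: $n\ge r\ge1$, $[n]=\{1,\dots,n\}$. A configuration $V=[v_1|\cdots|v_n]\in\mathbf{R}^{r\times n}$ is in general position if any $r$ columns are linearly independent. For $F\in\{-1,0,+1\}^n$ let $F_+,F_0,F_-$ be the sets of $i$ with $F_i=+1,0,-1$. $\mathcal{F}(V)$ is the set of sign vectors $(\operatorname{sgn}\langle v_1,u\rangle,\dots,\operatorname{sgn}\langle v_n,u\rangle)$, $u\ne0$, and $f_V(x,y)=\sum_{F\in\mathcal{F}(V)}x^{|F_0|}y^{|F_-|}$. Two configurations $V,W$ in general position differ by a mutation if there is a continuous path $V(t)$, $t\in[0,1]$, $V(0)=V$, $V(1)=W$, and $t_0\in(0,1)$ such that $V(t)$ is in general position for $t\ne t_0$, at $t_0$ exactly one $r$-element set $R\subseteq[n]$ of columns is linearly dependent, all $(r-1)$-element sets of columns of $V(t_0)$ are linearly independent, and the sign of $\det[v_i(t)]_{i\in R}$ for $t<t_0$ is opposite to that for $t>t_0$. In this situation there is $Y\in\{-1,+1\}^n$ such that the elements of $\{-1,+1\}^n$ in $\mathcal{F}(W)\setminus\mathcal{F}(V)$ are exactly $Y$ and $-Y$; with $j=|R\cap Y_-|$ and $k=|Y_-\setminus R|$ the mutation $V\to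 W$ is said to be of type $(j,k)\equiv(r-j,n-r-k)$ (replacing $Y$ by $-Y$ swaps the two representatives). *)

theory Defs
  imports "HOL-Analysis.Analysis"
begin

text \<open>A configuration of n vectors in R^r is a map nat => real^'r; only the columns
  with index i < n (i.e. [n] = {0..<n}) matter. r = CARD('r).\<close>

definition cols_indep :: "(nat \<Rightarrow> real^'r) \<Rightarrow> nat set \<Rightarrow> bool" where
  "cols_indep v S \<longleftrightarrow> inj_on v S \<and> independent (v ` S)"

definition general_position :: "nat \<Rightarrow> (nat \<Rightarrow> real^'r) \<Rightarrow> bool" where
  "general_position n v \<longleftrightarrow>
     (\<forall>S. S \<subseteq> {..<n} \<and> card S = CARD('r) \<longrightarrow> cols_indep v S)"

definition col_det :: "(nat \<Rightarrow> real^'r) \<Rightarrow> ('r \<Rightarrow> nat) \<Rightarrow> real" where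
  "col_det v g = det (\<chi> a. \<chi> b. (v (g b)) $ a)"

definition covectors :: "nat \<Rightarrow> (nat \<Rightarrow> real^'r) \<Rightarrow> (nat \<Rightarrow> real) set" where
  "covectors n v = {F. \<exists>u::real^'r. u \<noteq> 0 \<and>
       F = (\<lambda>i. if i < n then sgn (inner (v i) u) else 0)}"

definition fpoly :: "nat \<Rightarrow> (nat \<Rightarrow> real^'r) \<Rightarrow> real \<Rightarrow> real \<Rightarrow> real" where
  "fpoly n v x y = (\<Sum>F\<in>covectors n v.
       x ^ card {i\<in>{..<n}. F i = 0} * y ^ card {i\<in>{..<n}. F i = -1})"

definition mutation_via ::
  "nat \<Rightarrow> (nat \<Rightarrow> real^'r) \<Rightarrow> (nat \<Rightarrow> real^'r) \<Rightarrow> (real \<Rightarrow> nat \<Rightarrow> real^'r)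
     \<Rightarrow> real \<Rightarrow> nat set \<Rightarrow> bool" where
  "mutation_via n V W P t0 R \<longleftrightarrow>
     (\<forall>i<n. continuous_on {0..1} (\<lambda>t. P t i)) \<and>
     (\<forall>i<n. P 0 i = V i) \<and> (\<forall>i<n. P 1 i = W i) \<and>
     0 < t0 \<and> t0 < 1 \<and>
     (\<forall>t\<in>{0..1}. t \<noteq> t0 \<longrightarrow> general_position n (P t)) \<and>
     {S. S \<subseteq> {..<n} \<and> card S = CARD('r) \<and> \<not> cols_indep (P t0) S} = {R} \<and>
     (\<forall>S. S \<subseteq> {..<n} \<and> card S = CARD('r) - 1 \<longrightarrow> cols_indep (P t0) S) \<and>
     (\<exists>g. bij_betw g (UNIV::'r set) R \<and>
        (\<forall>t1 t2. 0 \<le> t1 \<and> t1 < t0 \<and> t0 < t2 \<and> t2 \<le> 1 \<longrightarrow>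
           sgn (col_det (P t1) g) = - sgn (col_det (P t2) g)))"

end

theory Submission
  imports Defs
begin

definition idx_indep :: "(nat \<Rightarrow> real^'r) \<Rightarrow> nat set \<Rightarrow> bool" where
  "idx_indep v S \<longleftrightarrow> (\<forall>a. (\<Sum>c\<in>S. a c *\<^sub>R v c) = 0 \<longrightarrow> (\<forall>c\<in>S. a c = 0))"

lemma cols_indep_idx:
  assumes "finite S"
  shows "cols_indep v S \<longleftrightarrow> idx_indep v S"
proof
  assume ci: "cols_indep v S"
  hence inj: "inj_on v S" and ind: "independent (v ` S)" by (auto simp: cols_indep_def)
  show "idx_indep v S"
    unfolding idx_indep_def
  proof (intro allI impI ballI)
    fix a c assume s: "(\<Sum>c\<in>S. a c *\<^sub>R v c) = 0" and c: "c \<in> S"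
    define u where "u x = a (the_inv_into S v x)" for x
    have "(\<Sum>x\<in>v ` S. u x *\<^sub>R x) = (\<Sum>c\<in>S. u (v c) *\<^sub>R v c)"
      by (rule sum.reindex[OF inj, unfolded comp_def])
    also have "\<dots> = (\<Sum>c\<in>S. a c *\<^sub>R v c)"
      by (rule sum.cong) (auto simp: u_def the_inv_into_f_f[OF inj])
    finally have "(\<Sum>x\<in>v ` S. u x *\<^sub>R x) = 0" using s by simp
    hence "u (v c) = 0"
      using ind assms c unfolding dependent_finite[OF finite_imageI[OF assms]]
      by (auto simp: scalar_mult_eq_scaleR)
    thus "a c = 0" by (simp add: u_def the_inv_into_f_f[OF inj c])
  qed
next
  assume ii: "idx_indep v S"
  have inj: "inj_on v S"
  proof (rule inj_onI, rule ccontr)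
    fix x y assume xy: "x \<in> S" "y \<in> S" "v x = v y" "x \<noteq> y"
    define a where "a c = (if c = x then 1 else if c = y then -1 else (0::real))" for c
    have "(\<Sum>c\<in>S. a c *\<^sub>R v c) = (\<Sum>c\<in>{x,y}. a c *\<^sub>R v c)"
      by (rule sum.mono_neutral_right) (use assms xy in \<open>auto simp: a_def\<close>)
    also have "\<dots> = 0" using xy by (simp add: a_def)
    finally have "a x = 0" using ii xy unfolding idx_indep_def by blast
    thus False by (simp add: a_def)
  qed
  have "independent (v ` S)"
  proof
    assume "dependent (v ` S)"
    then obtain u where u: "\<exists>x\<in>v ` S. u x \<noteq> 0" "(\<Sum>x\<in>v ` S. u x *\<^sub>R x) = 0"
      unfolding dependent_finite[OF finite_imageI[OF assms]] by (auto simp: scalar_mult_eq_scaleR)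
    have "(\<Sum>c\<in>S. u (v c) *\<^sub>R v c) = 0"
      using u(2) sum.reindex[OF inj, of "\<lambda>x. u x *\<^sub>R x"] by simp
    hence "\<forall>c\<in>S. u (v c) = 0" using ii[unfolded idx_indep_def, rule_format, of "\<lambda>c. u (v c)"] by blast
    thus False using u(1) by auto
  qed
  thus "cols_indep v S" using inj by (simp add: cols_indep_def)
qed

lemma idx_indep_subset: "idx_indep v S \<Longrightarrow> finite S \<Longrightarrow> D \<subseteq> S \<Longrightarrow> idx_indep v D"
  unfolding idx_indep_def
proof (intro allI impI ballI)
  fix a c assume h: "\<forall>a. (\<Sum>c\<in>S. a c *\<^sub>R v c) = 0 \<longrightarrow> (\<forall>c\<in>S. a c = 0)" "finite S" "D \<subseteq> S"
    "(\<Sum>c\<in>D. a c *\<^sub>R v c) = 0" "c \<in> D"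
  define b where "b x = (if x \<in> D then a x else 0)" for x
  have "(\<Sum>c\<in>S. b c *\<^sub>R v c) = (\<Sum>c\<in>D. b c *\<^sub>R v c)"
    by (rule sum.mono_neutral_right) (use h in \<open>auto simp: b_def\<close>)
  also have "\<dots> = 0" using h(4) by (simp add: b_def)
  finally have "b c = 0" using h by blast
  thus "a c = 0" using h by (simp add: b_def)
qed

lemma gp_idx_indep:
  assumes gp: "general_position n (v::nat \<Rightarrow> real^'r)" and rn: "CARD('r) \<le> n"
    and D: "D \<subseteq> {..<n}" "card D \<le> CARD('r)"
  shows "idx_indep v D"
proof -
  have fD: "finite D" using D finite_subset by blast
  have "CARD('r) - card D \<le> card ({..<n} - D)" 
    using D rn fD by (simp add: card_Diff_subset)
  then obtain E where E: "E \<subseteq> {..<n} - D" "card E = CARD('r) - card D" "finite E"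
    by (rule obtain_subset_with_card_n)
  let ?S = "D \<union> E"
  have "card ?S = CARD('r)" using E fD D by (subst card_Un_disjoint) auto
  moreover have "?S \<subseteq> {..<n}" using E D by auto
  ultimately have "cols_indep v ?S" using gp unfolding general_position_def by blast
  hence "idx_indep v ?S" using cols_indep_idx[of ?S v] fD E by simp
  thus ?thesis using idx_indep_subset[of v ?S D] fD E by simp
qed



definition cmat :: "(nat \<Rightarrow> real^'r) \<Rightarrow> ('r \<Rightarrow> nat) \<Rightarrow> real^'r^'r" where
  "cmat v h = (\<chi> a b. (v (h b)) $ a)"

lemma col_det_cmat: "col_det v h = det (cmat v h)"
  by (simp add: col_det_def cmat_def)

lemma cmat_mult: "cmat v h *v x = (\<Sum>b\<in>UNIV. (x $ b) *\<^sub>R v (h b))"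
  unfolding matrix_mult_sum scalar_mult_eq_scaleR
  by (rule sum.cong) (auto simp: column_def cmat_def vec_eq_iff)

lemma cmat_tmult: "transpose (cmat v h) *v u = (\<chi> b. inner (v (h b)) u)"
  unfolding matrix_mult_dot
  by (simp add: transpose_def cmat_def vec_eq_iff inner_vec_def)

lemma col_det_nz_iff: "col_det v h \<noteq> 0 \<longleftrightarrow> (\<forall>x. cmat v h *v x = 0 \<longrightarrow> x = 0)"
  unfolding col_det_cmat invertible_det_nz[symmetric] invertible_left_inverse
    matrix_left_invertible_ker ..

lemma col_det_nz_idx:
  assumes "inj h"
  shows "col_det v h \<noteq> 0 \<longleftrightarrow> idx_indep v (range h)"
proof
  assume d: "col_det v h \<noteq> 0"
  show "idx_indep v (range h)" unfolding idx_indep_def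
  proof (intro allI impI ballI)
    fix a c assume s: "(\<Sum>c\<in>range h. a c *\<^sub>R v c) = 0" and c: "c \<in> range h"
    define x where "x = (\<chi> b. a (h b))"
    have "cmat v h *v x = (\<Sum>c\<in>range h. a c *\<^sub>R v c)"
      unfolding cmat_mult x_def using sum.reindex[OF inj_on_subset[OF assms subset_UNIV], of "\<lambda>c. a c *\<^sub>R v c"]
      by simp
    hence "x = 0" using s d col_det_nz_iff by metis
    thus "a c = 0" using c by (auto simp: x_def vec_eq_iff)
  qed
next
  assume ii: "idx_indep v (range h)"
  show "col_det v h \<noteq> 0" unfolding col_det_nz_iff
  proof (intro allI impI)
    fix x assume "cmat v h *v x = 0"
    hence s: "(\<Sum>b\<in>UNIV. (x $ b) *\<^sub>R v (h b)) = 0" by (simp add: cmat_mult)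
    define a where "a c = x $ (inv h c)" for c
    have "(\<Sum>c\<in>range h. a c *\<^sub>R v c) = (\<Sum>b\<in>UNIV. a (h b) *\<^sub>R v (h b))"
      using sum.reindex[OF inj_on_subset[OF assms subset_UNIV], of "\<lambda>c. a c *\<^sub>R v c"] by simp
    also have "\<dots> = 0" using s by (simp add: a_def inv_f_f[OF assms])
    finally have "\<forall>c\<in>range h. a c = 0" using ii unfolding idx_indep_def by blast
    thus "x = 0" by (auto simp: a_def inv_f_f[OF assms] vec_eq_iff)
  qed
qed

lemma col_det_solve:
  assumes "col_det v h \<noteq> 0"
  shows "\<exists>u. \<forall>b. inner (v (h b)) u = y b"
proof -
  have "invertible (transpose (cmat v h))"
    using assms by (simp add: col_det_cmat invertible_det_nz)
  then obtain B where B: "transpose (cmat v h) ** B = mat 1"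
    unfolding invertible_right_inverse by blast
  define u where "u = B *v (\<chi> b. y b)"
  have "transpose (cmat v h) *v u = (\<chi> b. y b)"
    unfolding u_def matrix_vector_mul_assoc B by simp
  thus ?thesis unfolding cmat_tmult by (auto simp: vec_eq_iff)
qed

lemma col_det_perp:
  assumes "col_det v h \<noteq> 0" "\<forall>b. inner (v (h b)) u = 0"
  shows "u = 0"
proof -
  have "det (transpose (cmat v h)) \<noteq> 0" using assms by (simp add: col_det_cmat)
  hence "\<forall>x. transpose (cmat v h) *v x = 0 \<longrightarrow> x = 0"
    unfolding invertible_det_nz[symmetric] invertible_left_inverse matrix_left_invertible_ker .
  moreover have "transpose (cmat v h) *v u = 0" unfolding cmat_tmult using assms(2) by (simp add: vec_eq_iff)
  ultimately show ?thesis by blast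
qed

lemma col_det_cramer:
  assumes d: "col_det v h \<noteq> 0"
  shows "(\<Sum>b\<in>UNIV. col_det v (h(b:=c0)) *\<^sub>R v (h b)) = col_det v h *\<^sub>R v c0"
proof -
  have "invertible (cmat v h)" using d by (simp add: col_det_cmat invertible_det_nz)
  then obtain B where B: "cmat v h ** B = mat 1"
    unfolding invertible_right_inverse by blast
  define x where "x = B *v v c0"
  have Mx: "cmat v h *v x = v c0" unfolding x_def matrix_vector_mul_assoc B by simp
  have cd: "col_det v (h(b:=c0)) = x $ b * col_det v h" for b
  proof -
    have "col_det v (h(b:=c0)) = det (\<chi> i j. if j = b then (cmat v h *v x)$i else (cmat v h)$i$j)"
      unfolding Mx col_det_def by (rule arg_cong[where f=det]) (auto simp: cmat_def vec_eq_iff)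
    thus ?thesis unfolding cramer_lemma col_det_cmat .
  qed
  have "(\<Sum>b\<in>UNIV. col_det v (h(b:=c0)) *\<^sub>R v (h b)) = col_det v h *\<^sub>R (\<Sum>b\<in>UNIV. (x $ b) *\<^sub>R v (h b))"
    by (simp add: cd scaleR_sum_right mult.commute)
  also have "\<dots> = col_det v h *\<^sub>R v c0" using Mx by (simp add: cmat_mult)
  finally show ?thesis .
qed

lemma col_det_cong: "(\<And>b. v (h b) = w (h b)) \<Longrightarrow> col_det v h = col_det w h"
  by (simp add: col_det_def)



definition tope :: "nat \<Rightarrow> (nat \<Rightarrow> real) \<Rightarrow> bool" where
  "tope n T \<longleftrightarrow> (\<forall>i<n. T i = 1 \<or> T i = -1) \<and> (\<forall>i. n \<le> i \<longrightarrow> T i = 0)"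

definition svec :: "nat \<Rightarrow> (nat \<Rightarrow> real) \<Rightarrow> bool" where
  "svec n F \<longleftrightarrow> (\<forall>i<n. F i = 1 \<or> F i = 0 \<or> F i = -1) \<and> (\<forall>i. n \<le> i \<longrightarrow> F i = 0)"

definition compl :: "nat \<Rightarrow> (nat \<Rightarrow> real) \<Rightarrow> (nat \<Rightarrow> real) \<Rightarrow> bool" where
  "compl n F T \<longleftrightarrow> tope n T \<and> (\<forall>i<n. F i \<noteq> 0 \<longrightarrow> T i = F i)"

lemma gp_extend:
  assumes "CARD('r) \<le> n" "D \<subseteq> {..<n}" "card D \<le> CARD('r)"
  shows "\<exists>S. D \<subseteq> S \<and> S \<subseteq> {..<n} \<and> card S = CARD('r)"
proof -
  have fD: "finite D" using assms finite_subset by blast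
  have "CARD('r) - card D \<le> card ({..<n} - D)" 
    using assms fD by (simp add: card_Diff_subset)
  then obtain E where E: "E \<subseteq> {..<n} - D" "card E = CARD('r) - card D" "finite E"
    by (rule obtain_subset_with_card_n)
  have "card (D \<union> E) = CARD('r)" using E fD assms by (subst card_Un_disjoint) auto
  thus ?thesis using E assms by (intro exI[of _ "D \<union> E"]) auto
qed

lemma gp_basis:
  assumes gp: "general_position n (v::nat \<Rightarrow> real^'r)"
    and S: "S \<subseteq> {..<n}" "card S = CARD('r)"
  shows "\<exists>h::'r \<Rightarrow> nat. inj h \<and> range h = S \<and> col_det v h \<noteq> 0"
proof -
  have fS: "finite S" using S finite_subset by blast
  obtain h where h: "bij_betw h (UNIV::'r set) S"
    using finite_same_card_bij[of "UNIV::'r set" S] fS S by auto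
  hence ih: "inj h" "range h = S" by (auto simp: bij_betw_def)
  have "cols_indep v S" using gp S unfolding general_position_def by blast
  hence "idx_indep v S" using cols_indep_idx[OF fS] by blast
  hence "idx_indep v (range h)" using ih by simp
  thus ?thesis using ih col_det_nz_idx[OF ih(1)] by blast
qed

lemma gp_solve:
  assumes gp: "general_position n (v::nat \<Rightarrow> real^'r)" and rn: "CARD('r) \<le> n"
    and D: "D \<subseteq> {..<n}" "card D \<le> CARD('r)"
  shows "\<exists>u. \<forall>i\<in>D. inner (v i) u = y i"
proof -
  obtain S where S: "D \<subseteq> S" "S \<subseteq> {..<n}" "card S = CARD('r)" using gp_extend[OF rn D] by blast
  obtain h :: "'r \<Rightarrow> nat" where h: "inj h" "range h = S" "col_det v h \<noteq> 0"
    using gp_basis[OF gp S(2,3)] by blast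
  obtain u where "\<forall>b. inner (v (h b)) u = y (h b)" using col_det_solve[OF h(3), of "\<lambda>b. y (h b)"] by blast
  hence "\<forall>i\<in>S. inner (v i) u = y i" using h(2) by auto
  thus ?thesis using S by blast
qed

lemma gp_perp:
  assumes gp: "general_position n (v::nat \<Rightarrow> real^'r)"
    and D: "D \<subseteq> {..<n}" "CARD('r) \<le> card D" "\<forall>i\<in>D. inner (v i) u = 0"
  shows "u = 0"
proof -
  obtain S where S: "S \<subseteq> D" "card S = CARD('r)" "finite S"
    using obtain_subset_with_card_n[OF D(2)] by blast
  obtain h :: "'r \<Rightarrow> nat" where h: "inj h" "range h = S" "col_det v h \<noteq> 0"
    using gp_basis[OF gp _ S(2)] S D by blast
  show ?thesis using col_det_perp[OF h(3)] h(2) S D by auto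
qed

lemma covD:
  assumes "F \<in> covectors n v"
  obtains u where "u \<noteq> 0" "F = (\<lambda>i. if i < n then sgn (inner (v i) u) else 0)"
  using assms unfolding covectors_def by blast

lemma covI:
  assumes "u \<noteq> 0" "\<forall>i<n. F i = sgn (inner (v i) u)" "\<forall>i. n \<le> i \<longrightarrow> F i = 0"
  shows "F \<in> covectors n v"
  unfolding covectors_def using assms by (auto intro!: exI[of _ u])

lemma cov_svec: "F \<in> covectors n v \<Longrightarrow> svec n F"
  by (erule covD) (auto simp: svec_def sgn_if)

lemma cov_nonzero:
  assumes gp: "general_position n (v::nat \<Rightarrow> real^'r)" and rn: "CARD('r) \<le> n"
    and F: "F \<in> covectors n v"
  shows "\<exists>i<n. F i \<noteq> 0"
proof (rule ccontr)
  assume a: "\<not> ?thesis"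
  obtain u where u: "u \<noteq> 0" "F = (\<lambda>i. if i < n then sgn (inner (v i) u) else 0)" using F by (rule covD)
  have "\<forall>i\<in>{..<n}. inner (v i) u = 0" using a u by (auto simp: sgn_0_0)
  hence "u = 0" using gp_perp[OF gp, of "{..<n}"] rn by auto
  thus False using u by simp
qed

lemma cov_uminus: "F \<in> covectors n v \<Longrightarrow> - F \<in> covectors n v"
proof -
  assume "F \<in> covectors n v"
  then obtain u where u: "u \<noteq> 0" "F = (\<lambda>i. if i < n then sgn (inner (v i) u) else 0)" by (rule covD)
  show ?thesis by (rule covI[of "-u"]) (use u in \<open>auto simp: sgn_minus\<close>)
qed

lemma sgn_perturb:
  fixes a b e :: real
  assumes "a \<noteq> 0" "0 < e" "e \<le> \<bar>a\<bar> / (\<bar>b\<bar> + 1)"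
  shows "sgn (a + e * b) = sgn a"
proof -
  have "e * \<bar>b\<bar> \<le> \<bar>a\<bar> / (\<bar>b\<bar> + 1) * \<bar>b\<bar>" using assms by (intro mult_right_mono) auto
  also have "\<dots> < \<bar>a\<bar>"
  proof -
    have "\<bar>a\<bar> * \<bar>b\<bar> < \<bar>a\<bar> * (\<bar>b\<bar> + 1)" using assms by simp
    thus ?thesis by (simp add: field_simps)
  qed
  finally have "\<bar>e * b\<bar> < \<bar>a\<bar>" using assms by (simp add: abs_mult)
  thus ?thesis by (cases "a > 0") (auto simp: sgn_if abs_if split: if_splits)
qed

lemma cov_compl:
  assumes gp: "general_position n (v::nat \<Rightarrow> real^'r)" and rn: "CARD('r) \<le> n"
    and F: "F \<in> covectors n v" and T: "compl n F T"
  shows "T \<in> covectors n v"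
proof -
  obtain u where u: "u \<noteq> 0" "F = (\<lambda>i. if i < n then sgn (inner (v i) u) else 0)" using F by (rule covD)
  define Z where "Z = {i. i < n \<and> F i = 0}"
  define A where "A = {i. i < n \<and> F i \<noteq> 0}"
  have Zsub: "Z \<subseteq> {..<n}" by (auto simp: Z_def)
  have Zu: "\<forall>i\<in>Z. inner (v i) u = 0" by (auto simp: Z_def u sgn_0_0)
  have cZ: "card Z \<le> CARD('r)"
  proof (rule ccontr)
    assume "\<not> ?thesis"
    hence "u = 0" using gp_perp[OF gp Zsub _ Zu] by simp
    thus False using u by simp
  qed
  obtain w where w: "\<forall>i\<in>Z. inner (v i) w = T i" using gp_solve[OF gp rn Zsub cZ] by blast
  define q where "q i = \<bar>inner (v i) u\<bar> / (\<bar>inner (v i) w\<bar> + 1)" for i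
  define e where "e = (if A = {} then 1 else Min (q ` A))"
  have fA: "finite A" by (auto simp: A_def)
  have qpos: "q i > 0" if "i \<in> A" for i
    using that by (auto simp: q_def A_def u sgn_0_0 split: if_splits)
  have epos: "e > 0" using qpos fA by (auto simp: e_def)
  have ele: "e \<le> q i" if "i \<in> A" for i using that fA by (auto simp: e_def)
  define u' where "u' = u + e *\<^sub>R w"
  have inn: "inner (v i) u' = inner (v i) u + e * inner (v i) w" for i
    by (simp add: u'_def inner_add_right)
  have Ts: "T i = sgn (inner (v i) u')" if "i < n" for i
  proof (cases "F i = 0")
    case True
    hence "i \<in> Z" using that by (simp add: Z_def)
    hence "inner (v i) u' = e * T i" using inn Zu w by simp
    moreover have "T i = 1 \<or> T i = -1" using T that by (auto simp: compl_def tope_def)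
    ultimately show ?thesis using epos by auto
  next
    case False
    hence iA: "i \<in> A" using that by (simp add: A_def)
    have nz: "inner (v i) u \<noteq> 0" using False that u by (auto simp: sgn_0_0)
    have "sgn (inner (v i) u') = sgn (inner (v i) u)"
      unfolding inn by (rule sgn_perturb[OF nz epos]) (use ele[OF iA] in \<open>simp add: q_def\<close>)
    also have "\<dots> = F i" using that u by simp
    also have "\<dots> = T i" using T False that by (auto simp: compl_def)
    finally show ?thesis by simp
  qed
  have n0: "0 < n" using rn by (simp add: Suc_le_eq[symmetric]) (metis Suc_leI finite_UNIV_card_ge_0 finite order_trans)
  have "u' \<noteq> 0"
  proof
    assume "u' = 0"
    hence "T 0 = 0" using Ts[OF n0] by simp
    thus False using T n0 by (auto simp: compl_def tope_def)
  qed
  thus ?thesis by (rule covI) (use Ts T in \<open>auto simp: compl_def tope_def\<close>)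
qed

lemma sgn_comb:
  fixes x y p q :: real
  assumes "p > 0" "q > 0" "sgn x = sgn y"
  shows "sgn (p * x + q * y) = sgn x"
proof -
  have "(x > 0 \<and> y > 0) \<or> (x = 0 \<and> y = 0) \<or> (x < 0 \<and> y < 0)"
    using assms(3) by (auto simp: sgn_if split: if_splits)
  moreover
  { assume "x > 0 \<and> y > 0" hence "p * x + q * y > 0" using assms by (simp add: add_pos_pos) }
  moreover
  { assume "x < 0 \<and> y < 0" hence "p * x + q * y < 0" using assms by (simp add: add_neg_neg mult_pos_neg) }
  ultimately show ?thesis by auto
qed

lemma compl_cov_aux:
  "card {i. i < n \<and> F i = 0} = k \<Longrightarrow> svec n F \<Longrightarrow> (\<exists>i<n. F i \<noteq> 0) \<Longrightarrow>
    (\<forall>T. compl n F T \<longrightarrow> T \<in> covectors n v) \<Longrightarrow> F \<in> covectors n v"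
proof (induction k arbitrary: F)
  case 0
  hence "{i. i < n \<and> F i = 0} = {}" by simp
  hence "compl n F F" using 0 by (auto simp: compl_def tope_def svec_def)
  thus ?case using 0 by blast
next
  case (Suc k)
  then obtain z where z: "z < n" "F z = 0" by (metis (mono_tags, lifting) Collect_empty_eq card.empty nat.distinct(1))
  define F1 where "F1 = F(z := 1)"
  define F2 where "F2 = F(z := -1)"
  have setF: "{i. i < n \<and> F1 i = 0} = {i. i < n \<and> F i = 0} - {z}" "{i. i < n \<and> F2 i = 0} = {i. i < n \<and> F i = 0} - {z}"
    by (auto simp: F1_def F2_def z)
  have cF: "card ({i. i < n \<and> F i = 0} - {z}) = k" using Suc.prems(1) z by simp
  have cc: "compl n F T" if "compl n Fj T" "Fj z \<noteq> 0" "\<forall>i. i \<noteq> z \<longrightarrow> Fj i = F i" for Fj T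
    using that z by (auto simp: compl_def)
  have F1c: "F1 \<in> covectors n v"
  proof (rule Suc.IH)
    show "card {i. i < n \<and> F1 i = 0} = k" using setF cF by simp
    show "svec n F1" using Suc.prems z by (auto simp: svec_def F1_def)
    show "\<exists>i<n. F1 i \<noteq> 0" using z by (auto simp: F1_def)
    show "\<forall>T. compl n F1 T \<longrightarrow> T \<in> covectors n v" using Suc.prems cc[of F1] by (auto simp: F1_def)
  qed
  have F2c: "F2 \<in> covectors n v"
  proof (rule Suc.IH)
    show "card {i. i < n \<and> F2 i = 0} = k" using setF cF by simp
    show "svec n F2" using Suc.prems z by (auto simp: svec_def F2_def)
    show "\<exists>i<n. F2 i \<noteq> 0" using z by (auto simp: F2_def)
    show "\<forall>T. compl n F2 T \<longrightarrow> T \<in> covectors n v" using Suc.prems cc[of F2] by (auto simp: F2_def)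
  qed
  obtain u1 where u1: "u1 \<noteq> 0" "F1 = (\<lambda>i. if i < n then sgn (inner (v i) u1) else 0)" using F1c by (rule covD)
  obtain u2 where u2: "u2 \<noteq> 0" "F2 = (\<lambda>i. if i < n then sgn (inner (v i) u2) else 0)" using F2c by (rule covD)
  define a1 where "a1 = inner (v z) u1"
  define a2 where "a2 = inner (v z) u2"
  have a1: "a1 > 0" using fun_cong[OF u1(2), of z] z by (simp add: F1_def a1_def sgn_1_pos)
  have "sgn a2 = -1" using fun_cong[OF u2(2), of z] z by (simp add: F2_def a2_def)
  hence a2: "a2 < 0" by (simp add: sgn_1_neg)
  define u where "u = (- a2) *\<^sub>R u1 + a1 *\<^sub>R u2"
  have inn: "inner (v i) u = (- a2) * inner (v i) u1 + a1 * inner (v i) u2" for i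
    by (simp add: u_def inner_add_right inner_diff_right)
  have Fs: "F i = sgn (inner (v i) u)" if "i < n" for i
  proof (cases "i = z")
    case True
    thus ?thesis using z by (simp add: inn a1_def[symmetric] a2_def[symmetric])
  next
    case False
    have s1: "sgn (inner (v i) u1) = F i" using fun_cong[OF u1(2), of i] False that by (simp add: F1_def)
    have s2: "sgn (inner (v i) u2) = F i" using fun_cong[OF u2(2), of i] False that by (simp add: F2_def)
    show ?thesis unfolding inn using sgn_comb[of "-a2" a1 "inner (v i) u1" "inner (v i) u2"] a1 a2 s1 s2 by simp
  qed
  obtain i0 where i0: "i0 < n" "F i0 \<noteq> 0" using Suc.prems by blast
  have "u \<noteq> 0" using Fs[OF i0(1)] i0 by auto
  thus ?case by (rule covI) (use Fs Suc.prems in \<open>auto simp: svec_def\<close>)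
qed

lemma compl_cov:
  "svec n F \<Longrightarrow> (\<exists>i<n. F i \<noteq> 0) \<Longrightarrow> (\<forall>T. compl n F T \<longrightarrow> T \<in> covectors n v) \<Longrightarrow> F \<in> covectors n v"
  using compl_cov_aux by blast



definition kern :: "(nat \<Rightarrow> real^'r) \<Rightarrow> nat set \<Rightarrow> (nat \<Rightarrow> real) \<Rightarrow> bool" where
  "kern v S a \<longleftrightarrow> (\<Sum>c\<in>S. a c *\<^sub>R v c) = 0"

definition badC :: "(nat \<Rightarrow> real^'r) \<Rightarrow> (nat \<Rightarrow> real) \<Rightarrow> nat set \<Rightarrow> bool" where
  "badC v T C \<longleftrightarrow> (\<exists>l. kern v C l \<and> (\<forall>c\<in>C. l c * T c > 0))"

lemma kern_prop:
  assumes ii: "idx_indep v (S - {c0})" and fS: "finite S" and c0: "c0 \<in> S"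
    and a: "kern v S a" and a': "kern v S a'" and nz: "a' c0 \<noteq> 0"
  shows "\<forall>c\<in>S. a c = (a c0 / a' c0) * a' c"
proof -
  define k where "k = a c0 / a' c0"
  define nu where "nu c = a c - k * a' c" for c
  have "(\<Sum>c\<in>S. nu c *\<^sub>R v c) = (\<Sum>c\<in>S. a c *\<^sub>R v c) - k *\<^sub>R (\<Sum>c\<in>S. a' c *\<^sub>R v c)"
    by (simp add: nu_def scaleR_diff_left sum_subtractf scaleR_sum_right)
  also have "\<dots> = 0" using a a' by (simp add: kern_def)
  finally have s: "(\<Sum>c\<in>S. nu c *\<^sub>R v c) = 0" .
  have nu0: "nu c0 = 0" using nz by (simp add: nu_def k_def)
  have "(\<Sum>c\<in>S. nu c *\<^sub>R v c) = nu c0 *\<^sub>R v c0 + (\<Sum>c\<in>S - {c0}. nu c *\<^sub>R v c)"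
    using fS c0 by (simp add: sum.remove)
  hence "(\<Sum>c\<in>S - {c0}. nu c *\<^sub>R v c) = 0" using s nu0 by simp
  hence "\<forall>c\<in>S - {c0}. nu c = 0" using ii unfolding idx_indep_def by blast
  hence "\<forall>c\<in>S. nu c = 0" using nu0 by blast
  thus ?thesis by (simp add: nu_def k_def)
qed

lemma n_pos: "CARD('r::finite) \<le> n \<Longrightarrow> 0 < n"
proof -
  assume "CARD('r) \<le> n"
  moreover have "0 < CARD('r)" by simp
  ultimately show ?thesis by linarith
qed

lemma tope_cov_iff:
  assumes gp: "general_position n (v::nat \<Rightarrow> real^'r)" and rn: "CARD('r) \<le> n"
    and T: "tope n T"
  shows "T \<in> covectors n v \<longleftrightarrow> \<not> (\<exists>C. C \<subseteq> {..<n} \<and> card C = Suc CARD('r) \<and> badC v T C)"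
proof
  assume "T \<in> covectors n v"
  then obtain u where u: "u \<noteq> 0" "T = (\<lambda>i. if i < n then sgn (inner (v i) u) else 0)" by (rule covD)
  show "\<not> (\<exists>C. C \<subseteq> {..<n} \<and> card C = Suc CARD('r) \<and> badC v T C)"
  proof
    assume "\<exists>C. C \<subseteq> {..<n} \<and> card C = Suc CARD('r) \<and> badC v T C"
    then obtain C l where C: "C \<subseteq> {..<n}" "card C = Suc CARD('r)" "kern v C l" "\<forall>c\<in>C. l c * T c > 0"
      unfolding badC_def by blast
    have fC: "finite C" "C \<noteq> {}" using C(2) by (auto intro: card_ge_0_finite)
    have pos: "l c * inner (v c) u > 0" if "c \<in> C" for c
    proof -
      have "c < n" using C that by auto
      hence Tc: "T c = sgn (inner (v c) u)" using u by simp
      have "l c * T c > 0" using C that by blast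
      thus ?thesis unfolding Tc
        by (cases "inner (v c) u > 0"; cases "inner (v c) u < 0")
           (auto simp: zero_less_mult_iff)
    qed
    have "0 < (\<Sum>c\<in>C. l c * inner (v c) u)" by (rule sum_pos[OF fC]) (use pos in auto)
    also have "\<dots> = inner (\<Sum>c\<in>C. l c *\<^sub>R v c) u" by (simp add: inner_sum_left)
    also have "\<dots> = 0" using C(3) by (simp add: kern_def)
    finally show False by simp
  qed
next
  assume nb: "\<not> (\<exists>C. C \<subseteq> {..<n} \<and> card C = Suc CARD('r) \<and> badC v T C)"
  show "T \<in> covectors n v"
  proof (rule ccontr)
    assume ncov: "T \<notin> covectors n v"
    have T1: "T i = 1 \<or> T i = -1" if "i < n" for i using T that by (auto simp: tope_def)
    define w where "w i = T i *\<^sub>R v i" for i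
    have noa: "\<not> (\<exists>a. \<forall>i<n. inner (w i) a > 0)"
    proof
      assume "\<exists>a. \<forall>i<n. inner (w i) a > 0"
      then obtain a where a: "\<forall>i<n. inner (w i) a > 0" by blast
      have s: "T i = sgn (inner (v i) a)" if "i < n" for i
        using a that T1[OF that] by (auto simp: w_def sgn_if)
      have "a \<noteq> 0" using a n_pos[OF rn] by auto
      hence "T \<in> covectors n v" by (rule covI) (use s T in \<open>auto simp: tope_def\<close>)
      thus False using ncov by simp
    qed
    define K where "K = convex hull (w ` {..<n})"
    have "0 \<in> K"
    proof (rule ccontr)
      assume "0 \<notin> K"
      moreover have "convex K" by (simp add: K_def)
      moreover have "closed K" unfolding K_def
        by (intro compact_imp_closed compact_convex_hull finite_imp_compact) simp
      ultimately obtain a b where ab: "a \<noteq> 0" "0 < b" "\<forall>x\<in>K. inner a x > b"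
        using separating_hyperplane_closed_0 by blast
      have "\<forall>i<n. inner (w i) a > 0"
      proof (intro allI impI)
        fix i assume "i < n"
        hence "w i \<in> K" unfolding K_def by (intro hull_inc) simp
        thus "inner (w i) a > 0" using ab by (auto simp: inner_commute)
      qed
      thus False using noa by blast
    qed
    then obtain S u where Su: "finite S" "S \<subseteq> w ` {..<n}" "card S \<le> DIM(real^'r) + 1"
      "\<forall>x\<in>S. 0 \<le> u x" "sum u S = 1" "(\<Sum>x\<in>S. u x *\<^sub>R x) = 0"
      unfolding K_def convex_hull_caratheodory by blast
    obtain C where C: "C \<subseteq> {..<n}" "inj_on w C" "S = w ` C"
      using Su(2) subset_image_inj by meson
    have fC: "finite C" using C finite_subset by blast
    have cC: "card C = card S" using C card_image by metis
    define mu where "mu c = u (w c)" for c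
    define l where "l c = mu c * T c" for c
    have mu_nn: "\<forall>c\<in>C. 0 \<le> mu c" using Su C by (auto simp: mu_def)
    have musum: "sum mu C = 1" using Su(5) C sum.reindex[OF C(2), of u] by (simp add: mu_def comp_def)
    have "(\<Sum>c\<in>C. l c *\<^sub>R v c) = (\<Sum>c\<in>C. u (w c) *\<^sub>R w c)"
      by (rule sum.cong) (auto simp: l_def mu_def w_def)
    also have "\<dots> = 0" using Su(6) C sum.reindex[OF C(2), of "\<lambda>x. u x *\<^sub>R x"] by (simp add: comp_def)
    finally have kl: "kern v C l" by (simp add: kern_def)
    have zero_of: "False" if D: "D \<subseteq> C" "card D \<le> CARD('r)" "\<forall>c\<in>C - D. mu c = 0" for D
    proof -
      have fD: "finite D" using D fC finite_subset by blast
      have "(\<Sum>c\<in>C. l c *\<^sub>R v c) = (\<Sum>c\<in>D. l c *\<^sub>R v c)"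
        by (rule sum.mono_neutral_right) (use fC D in \<open>auto simp: l_def\<close>)
      hence "(\<Sum>c\<in>D. l c *\<^sub>R v c) = 0" using kl by (simp add: kern_def)
      moreover have "idx_indep v D" using gp_idx_indep[OF gp rn, of D] D C by auto
      ultimately have "\<forall>c\<in>D. l c = 0" unfolding idx_indep_def by blast
      hence "\<forall>c\<in>D. mu c = 0" using T1 D C by (force simp: l_def)
      hence "\<forall>c\<in>C. mu c = 0" using D by blast
      thus False using musum by simp
    qed
    have cCr: "card C = Suc CARD('r)"
    proof -
      have "card C \<le> Suc CARD('r)" using cC Su(3) by simp
      moreover have "\<not> card C \<le> CARD('r)" using zero_of[of C] by auto
      ultimately show ?thesis by simp
    qed
    have mupos: "\<forall>c\<in>C. mu c > 0"
    proof
      fix c assume c: "c \<in> C"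
      show "mu c > 0"
      proof (rule ccontr)
        assume "\<not> mu c > 0"
        hence "mu c = 0" using mu_nn c by force
        thus False using zero_of[of "C - {c}"] c cCr fC by auto
      qed
    qed
    have "badC v T C" unfolding badC_def
    proof (intro exI conjI)
      show "kern v C l" by (rule kl)
      show "\<forall>c\<in>C. l c * T c > 0"
      proof
        fix c assume c: "c \<in> C"
        hence "T c * T c = 1" using T1 C by force
        thus "l c * T c > 0" using mupos c by (simp add: l_def mult.assoc)
      qed
    qed
    thus False using nb C cCr by blast
  qed
qed

lemma kernel_sign:
  assumes gp: "general_position n (v::nat \<Rightarrow> real^'r)" and rn: "CARD('r) \<le> n"
    and C: "C \<subseteq> {..<n}" "card C = Suc CARD('r)" and K: "kern v C L" "\<forall>c\<in>C. L c \<noteq> 0"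
  shows "badC v T C \<longleftrightarrow> (\<forall>c\<in>C. L c * T c > 0) \<or> (\<forall>c\<in>C. L c * T c < 0)"
proof
  assume "badC v T C"
  then obtain l where l: "kern v C l" "\<forall>c\<in>C. l c * T c > 0" unfolding badC_def by blast
  have fC: "finite C" "C \<noteq> {}" using C(2) by (auto intro: card_ge_0_finite)
  then obtain c0 where c0: "c0 \<in> C" by blast
  have ii: "idx_indep v (C - {c0})" using gp_idx_indep[OF gp rn, of "C - {c0}"] C c0 fC by auto
  have pr: "\<forall>c\<in>C. l c = (l c0 / L c0) * L c" by (rule kern_prop[OF ii fC(1) c0 l(1) K(1)]) (use K c0 in auto)
  define k where "k = l c0 / L c0"
  have "k \<noteq> 0" using l(2) c0 K(2) by (auto simp: k_def)
  show "(\<forall>c\<in>C. L c * T c > 0) \<or> (\<forall>c\<in>C. L c * T c < 0)"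
  proof (cases "k > 0")
    case True
    have "\<forall>c\<in>C. L c * T c > 0"
    proof
      fix c assume c: "c \<in> C"
      have "k * (L c * T c) > 0" using l(2) c pr by (auto simp: k_def mult.assoc)
      thus "L c * T c > 0" using True by (simp add: zero_less_mult_iff)
    qed
    thus ?thesis by blast
  next
    case False
    hence kn: "k < 0" using \<open>k \<noteq> 0\<close> by simp
    have "\<forall>c\<in>C. L c * T c < 0"
    proof
      fix c assume c: "c \<in> C"
      have "k * (L c * T c) > 0" using l(2) c pr by (auto simp: k_def mult.assoc)
      thus "L c * T c < 0" using kn by (simp add: zero_less_mult_iff)
    qed
    thus ?thesis by blast
  qed
next
  assume "(\<forall>c\<in>C. L c * T c > 0) \<or> (\<forall>c\<in>C. L c * T c < 0)"
  thus "badC v T C"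
  proof
    assume "\<forall>c\<in>C. L c * T c > 0" thus ?thesis using K unfolding badC_def by blast
  next
    assume a: "\<forall>c\<in>C. L c * T c < 0"
    have "kern v C (\<lambda>c. - L c)" using K by (simp add: kern_def sum_negf)
    thus ?thesis using a unfolding badC_def by (intro exI[of _ "\<lambda>c. - L c"]) auto
  qed
qed

definition simplicial :: "nat \<Rightarrow> (nat \<Rightarrow> real^'r) \<Rightarrow> nat set \<Rightarrow> (nat \<Rightarrow> real) \<Rightarrow> bool" where
  "simplicial n v R Z \<longleftrightarrow> tope n Z \<and> (\<exists>\<beta>. (\<forall>e\<in>{..<n} - R. v e = (\<Sum>c\<in>R. \<beta> e c *\<^sub>R v c)) \<and>
      (\<forall>e\<in>{..<n} - R. \<forall>c\<in>R. Z e * \<beta> e c * Z c > 0))"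

lemma simplicial_uminus: "simplicial n v R Z \<Longrightarrow> simplicial n v R (- Z)"
  unfolding simplicial_def tope_def by auto

lemma sq_pm1: "(x::real) = 1 \<or> x = -1 \<Longrightarrow> x * x = 1" by auto

lemma SC_key:
  assumes sim: "simplicial n v R Z" and R: "R \<subseteq> {..<n}"
    and e: "e \<in> {..<n} - R"
    and nn: "\<forall>c\<in>R. Z c * inner (v c) u \<ge> 0" and c1: "c1 \<in> R" "inner (v c1) u \<noteq> 0"
  shows "sgn (inner (v e) u) = Z e"
proof -
  obtain \<beta> where b: "\<forall>e\<in>{..<n} - R. v e = (\<Sum>c\<in>R. \<beta> e c *\<^sub>R v c)"
      "\<forall>e\<in>{..<n} - R. \<forall>c\<in>R. Z e * \<beta> e c * Z c > 0" and T: "tope n Z"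
    using sim unfolding simplicial_def by blast
  have Z1: "Z i = 1 \<or> Z i = -1" if "i < n" for i using T that by (auto simp: tope_def)
  have fR: "finite R" using R finite_subset by blast
  have "Z e * inner (v e) u = (\<Sum>c\<in>R. (Z e * \<beta> e c * Z c) * (Z c * inner (v c) u))"
  proof -
    have "Z e * inner (v e) u = (\<Sum>c\<in>R. Z e * \<beta> e c * inner (v c) u)"
      using b(1) e by (simp add: inner_sum_left sum_distrib_left mult.assoc)
    also have "\<dots> = (\<Sum>c\<in>R. (Z e * \<beta> e c * Z c) * (Z c * inner (v c) u))"
    proof (rule sum.cong)
      fix c assume "c \<in> R"
      hence "Z c * Z c = 1" using Z1 R sq_pm1 by blast
      thus "Z e * \<beta> e c * inner (v c) u = (Z e * \<beta> e c * Z c) * (Z c * inner (v c) u)"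
        by (metis (no_types, lifting) mult.assoc mult.right_neutral)
    qed simp
    finally show ?thesis .
  qed
  also have "\<dots> > 0"
  proof (rule sum_pos2[OF fR c1(1)])
    have "Z c1 * inner (v c1) u > 0" using nn c1 Z1[of c1] R by force
    thus "0 < (Z e * \<beta> e c1 * Z c1) * (Z c1 * inner (v c1) u)" using b(2) e c1 by simp
    show "\<And>i. i \<in> R \<Longrightarrow> 0 \<le> Z e * \<beta> e i * Z i * (Z i * inner (v i) u)"
      using b(2) e nn by (simp add: less_imp_le)
  qed
  finally have "Z e * inner (v e) u > 0" .
  thus ?thesis using Z1[of e] e by (auto simp: sgn_if zero_less_mult_iff)
qed

lemma SC1:
  assumes gp: "general_position n (v::nat \<Rightarrow> real^'r)" and rn: "CARD('r) \<le> n"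
    and R: "R \<subseteq> {..<n}" "card R = CARD('r)" and sim: "simplicial n v R Z"
    and F: "svec n F" "\<forall>e\<in>{..<n} - R. F e = Z e" "\<forall>c\<in>R. F c = 0 \<or> F c = Z c" "\<exists>c\<in>R. F c \<noteq> 0"
  shows "F \<in> covectors n v"
proof -
  obtain u where u: "\<forall>c\<in>R. inner (v c) u = F c" using gp_solve[OF gp rn R(1)] R by force
  obtain c1 where c1: "c1 \<in> R" "F c1 \<noteq> 0" using F by blast
  have T: "tope n Z" using sim by (simp add: simplicial_def)
  have nn: "\<forall>c\<in>R. Z c * inner (v c) u \<ge> 0"
  proof
    fix c assume c: "c \<in> R"
    have "Z c = 1 \<or> Z c = -1" using T c R by (auto simp: tope_def)
    thus "Z c * inner (v c) u \<ge> 0" using u F(3) c by auto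
  qed
  have s: "F i = sgn (inner (v i) u)" if "i < n" for i
  proof (cases "i \<in> R")
    case True
    have "Z i = 1 \<or> Z i = -1" using T True R by (auto simp: tope_def)
    thus ?thesis using u F(3) True by auto
  next
    case False
    thus ?thesis using SC_key[OF sim R(1) _ nn c1(1)] u c1 F(2) that by auto
  qed
  have "u \<noteq> 0" using u c1 by auto
  thus ?thesis by (rule covI) (use s F in \<open>auto simp: svec_def\<close>)
qed

lemma SC2:
  assumes R: "R \<subseteq> {..<n}" and sim: "simplicial n v R Z"
    and F: "F \<in> covectors n v" "\<forall>c\<in>R. F c = 0 \<or> F c = Z c" "\<exists>c\<in>R. F c \<noteq> 0"
  shows "\<forall>e\<in>{..<n} - R. F e = Z e"
proof -
  obtain u where u: "u \<noteq> 0" "F = (\<lambda>i. if i < n then sgn (inner (v i) u) else 0)" using F(1) by (rule covD)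
  obtain c1 where c1: "c1 \<in> R" "F c1 \<noteq> 0" using F by blast
  have T: "tope n Z" using sim by (simp add: simplicial_def)
  have nn: "\<forall>c\<in>R. Z c * inner (v c) u \<ge> 0"
  proof
    fix c assume c: "c \<in> R"
    have "Z c = 1 \<or> Z c = -1" using T c R by (auto simp: tope_def)
    moreover have "c < n" using c R by auto
    hence "F c = sgn (inner (v c) u)" using u by simp
    hence "sgn (inner (v c) u) = 0 \<or> sgn (inner (v c) u) = Z c" using F(2) c by metis
    ultimately show "Z c * inner (v c) u \<ge> 0"
      by (cases "inner (v c) u > 0"; cases "inner (v c) u < 0") (auto simp: sgn_if dest: sym)
  qed
  have c1': "inner (v c1) u \<noteq> 0" using c1 u R by (auto simp: sgn_0_0)
  show ?thesis using SC_key[OF sim R _ nn c1(1) c1'] u by auto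
qed



lemma upd_range: "c0 \<notin> range h \<Longrightarrow> inj h \<Longrightarrow> range (h(b:=c0)) = insert c0 (range h - {h b})"
proof (intro set_eqI iffI)
  fix x assume "x \<in> range (h(b:=c0))" "inj h"
  then obtain y where "x = (h(b:=c0)) y" by blast
  thus "x \<in> insert c0 (range h - {h b})" using \<open>inj h\<close> by (cases "y = b") (auto simp: inj_eq)
next
  fix x assume x: "x \<in> insert c0 (range h - {h b})"
  show "x \<in> range (h(b:=c0))"
  proof (cases "x = c0")
    case True thus ?thesis by (metis fun_upd_same rangeI)
  next
    case False
    then obtain y where "x = h y" "y \<noteq> b" using x by auto
    thus ?thesis by (metis fun_upd_other rangeI)
  qed
qed
lemma upd_inj: "c0 \<notin> range h \<Longrightarrow> inj h \<Longrightarrow> inj (h(b:=c0))"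
  unfolding inj_def by (auto simp: image_def)
definition cvec :: "(nat \<Rightarrow> real^'r) \<Rightarrow> ('r \<Rightarrow> nat) \<Rightarrow> nat \<Rightarrow> nat \<Rightarrow> real" where
  "cvec v h c0 c = (if c \<in> range h then col_det v (h(inv h c := c0)) else - col_det v h)"

lemma cramer_kern:
  assumes d: "col_det v h \<noteq> 0" and ih: "inj h" and c0: "c0 \<notin> range h"
  shows "kern v (insert c0 (range h)) (cvec v h c0)"
proof -
  have "(\<Sum>c\<in>insert c0 (range h). cvec v h c0 c *\<^sub>R v c)
      = cvec v h c0 c0 *\<^sub>R v c0 + (\<Sum>c\<in>range h. cvec v h c0 c *\<^sub>R v c)"
    using c0 by (simp add: sum.insert)
  also have "(\<Sum>c\<in>range h. cvec v h c0 c *\<^sub>R v c) = (\<Sum>b\<in>UNIV. cvec v h c0 (h b) *\<^sub>R v (h b))"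
    using sum.reindex[OF inj_on_subset[OF ih subset_UNIV], of "\<lambda>c. cvec v h c0 c *\<^sub>R v c"] by simp
  also have "\<dots> = (\<Sum>b\<in>UNIV. col_det v (h(b:=c0)) *\<^sub>R v (h b))"
    by (simp add: cvec_def inv_f_f[OF ih])
  also have "\<dots> = col_det v h *\<^sub>R v c0" by (rule col_det_cramer[OF d])
  finally show ?thesis using c0 by (simp add: kern_def cvec_def)
qed

lemma continuous_col_det:
  assumes "\<And>b. continuous_on S (\<lambda>t. P t (h b))"
  shows "continuous_on S (\<lambda>t. col_det (P t) h)"
  unfolding col_det_def det_def
  by (intro continuous_intros continuous_on_component assms) 

locale mut =
  fixes n :: nat and V W :: "nat \<Rightarrow> real^'r" and P :: "real \<Rightarrow> nat \<Rightarrow> real^'r"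
    and t0 :: real and R :: "nat set"
  assumes rn: "CARD('r) \<le> n" and gpV: "general_position n V" and gpW: "general_position n W"
    and mv: "mutation_via n V W P t0 R"
begin

lemma mv': "(\<forall>i<n. continuous_on {0..1} (\<lambda>t. P t i)) \<and>
     (\<forall>i<n. P 0 i = V i) \<and> (\<forall>i<n. P 1 i = W i) \<and>
     0 < t0 \<and> t0 < 1 \<and>
     (\<forall>t\<in>{0..1}. t \<noteq> t0 \<longrightarrow> general_position n (P t)) \<and>
     {S. S \<subseteq> {..<n} \<and> card S = CARD('r) \<and> \<not> cols_indep (P t0) S} = {R} \<and>
     (\<forall>S. S \<subseteq> {..<n} \<and> card S = CARD('r) - 1 \<longrightarrow> cols_indep (P t0) S) \<and>
     (\<exists>g. bij_betw g (UNIV::'r set) R \<and>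
        (\<forall>t1 t2. 0 \<le> t1 \<and> t1 < t0 \<and> t0 < t2 \<and> t2 \<le> 1 \<longrightarrow>
           sgn (col_det (P t1) g) = - sgn (col_det (P t2) g)))"
  using mv unfolding mutation_via_def .

lemma cont: "\<forall>i<n. continuous_on {0..1} (\<lambda>t. P t i)" using mv' by (rule conjunct1)
lemma P0: "\<forall>i<n. P 0 i = V i" using mv'[THEN conjunct2] by (rule conjunct1)
lemma P1: "\<forall>i<n. P 1 i = W i" using mv'[THEN conjunct2, THEN conjunct2] by (rule conjunct1)
lemma t0: "0 < t0" "t0 < 1" using mv'[THEN conjunct2, THEN conjunct2, THEN conjunct2] by (rule conjunct1, rule conjunct2[THEN conjunct1])
lemma gpt: "\<forall>t\<in>{0..1}. t \<noteq> t0 \<longrightarrow> general_position n (P t)" using mv'[THEN conjunct2, THEN conjunct2, THEN conjunct2, THEN conjunct2, THEN conjunct2] by (rule conjunct1)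
lemma dep: "{S. S \<subseteq> {..<n} \<and> card S = CARD('r) \<and> \<not> cols_indep (P t0) S} = {R}" using mv'[THEN conjunct2, THEN conjunct2, THEN conjunct2, THEN conjunct2, THEN conjunct2, THEN conjunct2] by (rule conjunct1)
lemma r1: "\<forall>S. S \<subseteq> {..<n} \<and> card S = CARD('r) - 1 \<longrightarrow> cols_indep (P t0) S" using mv'[THEN conjunct2, THEN conjunct2, THEN conjunct2, THEN conjunct2, THEN conjunct2, THEN conjunct2, THEN conjunct2] by (rule conjunct1)
lemma gex: "\<exists>g. bij_betw g (UNIV::'r set) R \<and>
        (\<forall>t1 t2. 0 \<le> t1 \<and> t1 < t0 \<and> t0 < t2 \<and> t2 \<le> 1 \<longrightarrow>
           sgn (col_det (P t1) g) = - sgn (col_det (P t2) g))"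
  using mv'[THEN conjunct2, THEN conjunct2, THEN conjunct2, THEN conjunct2, THEN conjunct2, THEN conjunct2, THEN conjunct2] by (rule conjunct2)

definition g where "g = (SOME g. bij_betw g (UNIV::'r set) R \<and>
        (\<forall>t1 t2. 0 \<le> t1 \<and> t1 < t0 \<and> t0 < t2 \<and> t2 \<le> 1 \<longrightarrow>
           sgn (col_det (P t1) g) = - sgn (col_det (P t2) g)))"

lemma g: "bij_betw g (UNIV::'r set) R" "\<forall>t1 t2. 0 \<le> t1 \<and> t1 < t0 \<and> t0 < t2 \<and> t2 \<le> 1 \<longrightarrow>
           sgn (col_det (P t1) g) = - sgn (col_det (P t2) g)"
  using someI_ex[OF gex] unfolding g_def by (rule conjunct1, rule conjunct2)

lemma ginj: "inj g" and grange: "range g = R" using g(1) by (auto simp: bij_betw_def)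

lemma R: "R \<subseteq> {..<n}" "card R = CARD('r)" "\<not> cols_indep (P t0) R"
proof -
  have "R \<in> {S. S \<subseteq> {..<n} \<and> card S = CARD('r) \<and> \<not> cols_indep (P t0) S}" using dep by simp
  thus "R \<subseteq> {..<n}" "card R = CARD('r)" "\<not> cols_indep (P t0) R" by simp_all
qed

lemma fR: "finite R" using R finite_subset by blast

lemma col_det_P0: "range h \<subseteq> {..<n} \<Longrightarrow> col_det (P 0) h = col_det V h"
  by (rule col_det_cong) (use P0 in auto)

lemma col_det_P1: "range h \<subseteq> {..<n} \<Longrightarrow> col_det (P 1) h = col_det W h"
  by (rule col_det_cong) (use P1 in auto)

lemma col_det_cont: "range h \<subseteq> {..<n} \<Longrightarrow> continuous_on {0..1} (\<lambda>t. col_det (P t) h)"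
  by (rule continuous_col_det) (use cont in auto)

lemma inj_card: "inj (h::'r \<Rightarrow> nat) \<Longrightarrow> card (range h) = CARD('r)"
  by (simp add: card_image)

lemma col_det_nz:
  assumes ih: "inj (h::'r \<Rightarrow> nat)" and hr: "range h \<subseteq> {..<n}" "range h \<noteq> R" and t: "t \<in> {0..1}"
  shows "col_det (P t) h \<noteq> 0"
proof -
  have ci: "cols_indep (P t) (range h)"
  proof (cases "t = t0")
    case True
    show ?thesis
    proof (rule ccontr)
      assume "\<not> cols_indep (P t) (range h)"
      hence "range h \<in> {S. S \<subseteq> {..<n} \<and> card S = CARD('r) \<and> \<not> cols_indep (P t0) S}"
        using hr(1) inj_card[OF ih] True by simp
      hence "range h \<in> {R}" using dep by simp
      thus False using hr(2) by simp
    qed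
  next
    case False
    hence "general_position n (P t)" using gpt t by blast
    thus ?thesis using hr(1) inj_card[OF ih] unfolding general_position_def by blast
  qed
  thus ?thesis using cols_indep_idx[of "range h" "P t"] col_det_nz_idx[OF ih] by simp
qed

lemma sgn_const_aux:
  fixes f :: "real \<Rightarrow> real"
  assumes c: "continuous_on {a..b} f" and ab: "a \<le> b" and nz: "\<forall>t\<in>{a..b}. f t \<noteq> 0"
  shows "sgn (f a) = sgn (f b)"
proof (rule ccontr)
  assume ne: "sgn (f a) \<noteq> sgn (f b)"
  have fa: "f a \<noteq> 0" "f b \<noteq> 0" using nz ab by auto
  have "(f a < 0 \<and> 0 < f b) \<or> (f b < 0 \<and> 0 < f a)" using ne fa by (auto simp: sgn_if split: if_splits)
  then obtain x where "a \<le> x" "x \<le> b" "f x = 0"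
    using IVT'[of f a 0 b] IVT2'[of f b 0 a] c ab by (auto intro: less_imp_le)
  thus False using nz by auto
qed

lemma sgn_const:
  assumes ih: "inj (h::'r \<Rightarrow> nat)" and hr: "range h \<subseteq> {..<n}" "range h \<noteq> R" and t: "t \<in> {0..1}"
  shows "sgn (col_det (P t) h) = sgn (col_det V h)"
proof -
  have "sgn (col_det (P 0) h) = sgn (col_det (P t) h)"
    by (rule sgn_const_aux[OF continuous_on_subset[OF col_det_cont[OF hr(1)]]])
       (use t col_det_nz[OF ih hr] in auto)
  thus ?thesis using col_det_P0[OF hr(1)] by simp
qed

lemma sgn_VW:
  assumes ih: "inj (h::'r \<Rightarrow> nat)" and hr: "range h \<subseteq> {..<n}" "range h \<noteq> R"
  shows "sgn (col_det W h) = sgn (col_det V h)" "col_det V h \<noteq> 0" "col_det W h \<noteq> 0"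
proof -
  show "sgn (col_det W h) = sgn (col_det V h)" using sgn_const[OF ih hr, of 1] col_det_P1[OF hr(1)] by simp
  show "col_det V h \<noteq> 0" using col_det_nz[OF ih hr, of 0] col_det_P0[OF hr(1)] by simp
  show "col_det W h \<noteq> 0" using col_det_nz[OF ih hr, of 1] col_det_P1[OF hr(1)] by simp
qed

lemma detg: "col_det V g \<noteq> 0" "col_det W g \<noteq> 0" "sgn (col_det W g) = - sgn (col_det V g)"
    "col_det (P t0) g = 0"
proof -
  have Rr: "range g \<subseteq> {..<n}" using grange R by simp
  have "cols_indep V R" "cols_indep W R" using gpV gpW R unfolding general_position_def by blast+
  thus "col_det V g \<noteq> 0" "col_det W g \<noteq> 0"
    using cols_indep_idx[OF fR] col_det_nz_idx[OF ginj] grange by auto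
  show "sgn (col_det W g) = - sgn (col_det V g)"
    using g(2)[rule_format, of 0 1] t0 col_det_P0[OF Rr] col_det_P1[OF Rr] by simp
  show "col_det (P t0) g = 0"
    using R(3) cols_indep_idx[OF fR] col_det_nz_idx[OF ginj] grange by auto
qed

lemma upd_props:
  assumes e: "e \<in> {..<n} - R"
  shows "inj (g(b:=e))" "range (g(b:=e)) \<subseteq> {..<n}" "range (g(b:=e)) \<noteq> R"
proof -
  have e': "e \<notin> range g" using e grange by auto
  show "inj (g(b:=e))" by (rule upd_inj[OF e' ginj])
  show "range (g(b:=e)) \<subseteq> {..<n}" using upd_range[OF e' ginj] e R grange by auto
  show "range (g(b:=e)) \<noteq> R" using upd_range[OF e' ginj] e by auto
qed

lemma kern_t0:
  assumes e: "e \<in> {..<n} - R"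
  shows "(\<Sum>b\<in>UNIV. col_det (P t0) (g(b:=e)) *\<^sub>R P t0 (g b)) = 0"
proof -
  define \<Phi> where "\<Phi> t = (\<Sum>b\<in>UNIV. col_det (P t) (g(b:=e)) *\<^sub>R P t (g b)) - col_det (P t) g *\<^sub>R P t e" for t
  have Rr: "range g \<subseteq> {..<n}" using grange R by simp
  have cP: "continuous_on {0..1} (\<lambda>t. P t i)" if "i < n" for i using cont that by blast
  have gb: "g b < n" for b using Rr by auto
  have c1: "continuous_on {0..1} (\<lambda>t. (\<Sum>b\<in>UNIV. col_det (P t) (g(b:=e)) *\<^sub>R P t (g b)))"
    by (rule continuous_on_sum, rule continuous_on_scaleR[OF col_det_cont[OF upd_props(2)[OF e]] cP[OF gb]])
  have c2: "continuous_on {0..1} (\<lambda>t. col_det (P t) g *\<^sub>R P t e)"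
    by (rule continuous_on_scaleR[OF col_det_cont[OF Rr] cP]) (use e in auto)
  have c: "continuous_on {0..1} \<Phi>" unfolding \<Phi>_def by (rule continuous_on_diff[OF c1 c2])
  have z: "\<Phi> t = 0" if "t \<in> {0..1}" "t \<noteq> t0" for t
  proof -
    have "general_position n (P t)" using gpt that by blast
    hence "cols_indep (P t) R" using R unfolding general_position_def by blast
    hence "idx_indep (P t) R" using cols_indep_idx[OF fR] by blast
    hence "col_det (P t) g \<noteq> 0" using col_det_nz_idx[OF ginj] grange by simp
    thus ?thesis unfolding \<Phi>_def using col_det_cramer by simp
  qed
  have t0i: "t0 \<in> {0..1}" using t0 by simp
  have l1: "(\<Phi> \<longlongrightarrow> \<Phi> t0) (at t0)"
    using c t0i t0 unfolding continuous_on_def by (metis at_within_Icc_at)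
  have "eventually (\<lambda>t. \<Phi> t = 0) (at t0 within {0..1})"
    unfolding eventually_at_filter using z by (intro always_eventually) auto
  hence "eventually (\<lambda>t. \<Phi> t = 0) (at t0)" using t0 by (simp add: at_within_Icc_at)
  hence l2: "(\<Phi> \<longlongrightarrow> 0) (at t0)" by (rule tendsto_eventually)
  have "\<Phi> t0 = 0" using tendsto_unique[OF _ l1 l2] by simp
  thus ?thesis using detg(4) by (simp add: \<Phi>_def)
qed

end



lemma sgn_mult_pos_iff: "sgn (a::real) = sgn b \<Longrightarrow> (a * t > 0 \<longleftrightarrow> b * t > 0) \<and> (a * t < 0 \<longleftrightarrow> b * t < 0)"
  by (auto simp: sgn_if zero_less_mult_iff mult_less_0_iff split: if_splits)

lemma pm1_sgn: "(T::real) = 1 \<or> T = -1 \<Longrightarrow> L * T > 0 \<Longrightarrow> T = sgn L"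
  by (auto simp: sgn_if zero_less_mult_iff)

lemma pm1_sgn': "(T::real) = 1 \<or> T = -1 \<Longrightarrow> L * T < 0 \<Longrightarrow> T = - sgn L"
  by (auto simp: sgn_if mult_less_0_iff)

context mut begin

lemma ginv: "c \<in> R \<Longrightarrow> g (inv g c) = c"
  using grange by (simp add: f_inv_into_f)

lemma Rne: "R \<noteq> {}" using R(2) by auto

lemma idx_R_minus:
  assumes "c \<in> R" shows "idx_indep (P t0) (R - {c})"
proof -
  have "card (R - {c}) = CARD('r) - 1" using assms R fR by simp
  hence "cols_indep (P t0) (R - {c})" using r1 R by blast
  thus ?thesis using cols_indep_idx[of "R - {c}"] fR by blast
qed

definition avec :: "real \<Rightarrow> nat \<Rightarrow> nat \<Rightarrow> real" where
  "avec t e c = col_det (P t) (g(inv g c := e))"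

lemma kern_R_t0:
  assumes e: "e \<in> {..<n} - R" shows "kern (P t0) R (avec t0 e)"
proof -
  have "(\<Sum>c\<in>R. avec t0 e c *\<^sub>R P t0 c) = (\<Sum>b\<in>UNIV. avec t0 e (g b) *\<^sub>R P t0 (g b))"
    using sum.reindex[OF ginj, of "\<lambda>c. avec t0 e c *\<^sub>R P t0 c"] grange by simp
  also have "\<dots> = 0" using kern_t0[OF e] by (simp add: avec_def inv_f_f[OF ginj])
  finally show ?thesis by (simp add: kern_def)
qed

lemma avec_nz:
  assumes e: "e \<in> {..<n} - R" and c: "c \<in> R" and t: "t \<in> {0..1}"
  shows "avec t e c \<noteq> 0"
  unfolding avec_def by (rule col_det_nz[OF upd_props[OF e] t])

lemma avec_sgn:
  assumes e: "e \<in> {..<n} - R" and c: "c \<in> R"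
  shows "sgn (avec t0 e c) = sgn (col_det V (g(inv g c := e)))"
        "sgn (col_det W (g(inv g c := e))) = sgn (col_det V (g(inv g c := e)))"
  using sgn_const[OF upd_props[OF e], of t0] sgn_VW[OF upd_props[OF e]] t0
  by (auto simp: avec_def)

definition rho :: "nat \<Rightarrow> nat \<Rightarrow> real" where
  "rho e1 c = sgn (avec t0 e1 c)"

lemma rho_pm:
  assumes e1: "e1 \<in> {..<n} - R" and c: "c \<in> R" shows "rho e1 c = 1 \<or> rho e1 c = -1"
  using avec_nz[OF e1 c, of t0] t0 by (auto simp: rho_def sgn_if)

lemma signs:
  assumes e1: "e1 \<in> {..<n} - R" and e: "e \<in> {..<n} - R"
  shows "\<exists>\<epsilon>. (\<epsilon> = 1 \<or> \<epsilon> = -1) \<and> (\<forall>c\<in>R. sgn (col_det V (g(inv g c := e))) = \<epsilon> * rho e1 c \<and>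
            sgn (col_det W (g(inv g c := e))) = \<epsilon> * rho e1 c)"
proof -
  obtain c0 where c0: "c0 \<in> R" using Rne by blast
  have t0i: "t0 \<in> {0..1}" using t0 by simp
  have pr: "\<forall>c\<in>R. avec t0 e c = (avec t0 e c0 / avec t0 e1 c0) * avec t0 e1 c"
    by (rule kern_prop[OF idx_R_minus[OF c0] fR c0 kern_R_t0[OF e] kern_R_t0[OF e1] avec_nz[OF e1 c0 t0i]])
  define k where "k = avec t0 e c0 / avec t0 e1 c0"
  have k0: "k \<noteq> 0" using avec_nz[OF e c0 t0i] avec_nz[OF e1 c0 t0i] by (simp add: k_def)
  show ?thesis
  proof (intro exI conjI ballI)
    show "sgn k = 1 \<or> sgn k = -1" using k0 by (auto simp: sgn_if)
    fix c assume c: "c \<in> R"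
    have "sgn (avec t0 e c) = sgn k * rho e1 c" using pr c by (simp add: k_def rho_def sgn_mult)
    thus "sgn (col_det V (g(inv g c := e))) = sgn k * rho e1 c"
         "sgn (col_det W (g(inv g c := e))) = sgn k * rho e1 c"
      using avec_sgn[OF e c] by simp_all
  qed
qed

lemma VW_cases_gp: "(v1 = V \<and> v2 = W) \<or> (v1 = W \<and> v2 = V) \<Longrightarrow> general_position n v1 \<and> general_position n v2"
  using gpV gpW by auto

lemma tope_change:
  assumes e1: "e1 \<in> {..<n} - R" and vv: "(v1 = V \<and> v2 = W) \<or> (v1 = W \<and> v2 = V)"
    and T: "tope n T" "T \<in> covectors n v2" "T \<notin> covectors n v1"
  shows "(\<forall>c\<in>R. T c = rho e1 c) \<or> (\<forall>c\<in>R. T c = - rho e1 c)"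
proof -
  have gp1: "general_position n v1" and gp2: "general_position n v2" using VW_cases_gp[OF vv] by auto
  have T1: "T i = 1 \<or> T i = -1" if "i < n" for i using T that by (auto simp: tope_def)
  obtain C where C: "C \<subseteq> {..<n}" "card C = Suc CARD('r)" "badC v1 T C"
    using tope_cov_iff[OF gp1 rn T(1)] T(3) by blast
  have fC: "finite C" using C finite_subset by blast
  show ?thesis
  proof (cases "R \<subseteq> C")
    case True
    have "card (C - R) = 1" using True C fR R by (simp add: card_Diff_subset)
    then obtain e where Ce: "C - R = {e}" by (metis card_1_singletonE)
    have e: "e \<in> {..<n} - R" using Ce C by auto
    have CeR: "C = insert e (range g)" using Ce True grange by auto
    have eg: "e \<notin> range g" using e grange by auto
    have d1: "col_det v1 g \<noteq> 0" using vv detg by auto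
    have K: "kern v1 C (cvec v1 g e)" using cramer_kern[OF d1 ginj eg] CeR by simp
    obtain \<epsilon> where eps: "\<epsilon> = 1 \<or> \<epsilon> = -1" "\<forall>c\<in>R. sgn (col_det V (g(inv g c := e))) = \<epsilon> * rho e1 c \<and>
            sgn (col_det W (g(inv g c := e))) = \<epsilon> * rho e1 c" using signs[OF e1 e] by blast
    have sR: "sgn (cvec v1 g e c) = \<epsilon> * rho e1 c" if "c \<in> R" for c
      using eps(2) that vv grange by (auto simp: cvec_def)
    have nzC: "\<forall>c\<in>C. cvec v1 g e c \<noteq> 0"
    proof
      fix c assume "c \<in> C"
      show "cvec v1 g e c \<noteq> 0"
      proof (cases "c \<in> R")
        case True thus ?thesis using sR[OF True] eps(1) rho_pm[OF e1 True] by auto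
      next
        case False thus ?thesis using d1 grange by (simp add: cvec_def)
      qed
    qed
    have "(\<forall>c\<in>C. cvec v1 g e c * T c > 0) \<or> (\<forall>c\<in>C. cvec v1 g e c * T c < 0)"
      using kernel_sign[OF gp1 rn C(1,2) K nzC] C(3) by blast
    thus ?thesis
    proof
      assume a: "\<forall>c\<in>C. cvec v1 g e c * T c > 0"
      have "\<forall>c\<in>R. T c = \<epsilon> * rho e1 c"
        using a True pm1_sgn[OF T1] sR R by (metis subsetD lessThan_iff)
      thus ?thesis using eps(1) by auto
    next
      assume a: "\<forall>c\<in>C. cvec v1 g e c * T c < 0"
      have "\<forall>c\<in>R. T c = - (\<epsilon> * rho e1 c)"
        using a True pm1_sgn'[OF T1] sR R by (metis subsetD lessThan_iff)
      thus ?thesis using eps(1) by auto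
    qed
  next
    case False
    have Cne: "C \<noteq> {}" using C(2) by auto
    then obtain c0 where c0: "c0 \<in> C" by blast
    have "card (C - {c0}) = CARD('r)" using C fC c0 by simp
    then obtain h :: "'r \<Rightarrow> nat" where h: "bij_betw h UNIV (C - {c0})"
      using finite_same_card_bij[of "UNIV::'r set" "C - {c0}"] fC by auto
    have ih: "inj h" and rh: "range h = C - {c0}" using h by (auto simp: bij_betw_def)
    have c0h: "c0 \<notin> range h" using rh by simp
    have CC: "C = insert c0 (range h)" using rh c0 by auto
    have hN: "range h \<subseteq> {..<n}" "range h \<noteq> R" using rh C False by auto
    have sv: "sgn (col_det v1 h) = sgn (col_det v2 h)" "col_det v1 h \<noteq> 0" "col_det v2 h \<noteq> 0"
      using sgn_VW[OF ih hN] vv by auto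
    have su: "sgn (col_det v1 (h(b:=c0))) = sgn (col_det v2 (h(b:=c0)))"
             "col_det v1 (h(b:=c0)) \<noteq> 0" "col_det v2 (h(b:=c0)) \<noteq> 0" for b
    proof -
      have i: "inj (h(b:=c0))" by (rule upd_inj[OF c0h ih])
      have hb: "h b \<noteq> c0" using c0h by auto
      have "C - {h b} = insert c0 (range h - {h b})" using CC hb by blast
      hence r: "range (h(b:=c0)) = C - {h b}" using upd_range[OF c0h ih, of b] by simp
      have "range (h(b:=c0)) \<subseteq> {..<n}" "range (h(b:=c0)) \<noteq> R" using r C False by auto
      thus "sgn (col_det v1 (h(b:=c0))) = sgn (col_det v2 (h(b:=c0)))"
             "col_det v1 (h(b:=c0)) \<noteq> 0" "col_det v2 (h(b:=c0)) \<noteq> 0"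
        using sgn_VW[OF i] vv by auto
    qed
    have K1: "kern v1 C (cvec v1 h c0)" using cramer_kern[OF sv(2) ih c0h] CC by simp
    have K2: "kern v2 C (cvec v2 h c0)" using cramer_kern[OF sv(3) ih c0h] CC by simp
    have ss: "sgn (cvec v1 h c0 c) = sgn (cvec v2 h c0 c)" for c
      using sv su by (simp add: cvec_def sgn_minus)
    have nz1: "\<forall>c\<in>C. cvec v1 h c0 c \<noteq> 0" using sv su by (simp add: cvec_def)
    have nz2: "\<forall>c\<in>C. cvec v2 h c0 c \<noteq> 0" using sv su by (simp add: cvec_def)
    have "badC v2 T C"
      using kernel_sign[OF gp1 rn C(1,2) K1 nz1] kernel_sign[OF gp2 rn C(1,2) K2 nz2] C(3)
        sgn_mult_pos_iff[OF ss] by simp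
    hence "\<not> T \<in> covectors n v2" using tope_cov_iff[OF gp2 rn T(1)] C by blast
    thus ?thesis using T by blast
  qed
qed

lemma beta_eq:
  assumes v: "v = V \<or> v = W" and e: "e \<in> {..<n} - R"
  shows "v e = (\<Sum>c\<in>R. (col_det v (g(inv g c := e)) / col_det v g) *\<^sub>R v c)"
proof -
  have d: "col_det v g \<noteq> 0" using v detg by auto
  have "(\<Sum>c\<in>R. (col_det v (g(inv g c := e)) / col_det v g) *\<^sub>R v c)
      = (\<Sum>b\<in>UNIV. (col_det v (g(b := e)) / col_det v g) *\<^sub>R v (g b))"
    using sum.reindex[OF ginj, of "\<lambda>c. (col_det v (g(inv g c := e)) / col_det v g) *\<^sub>R v c"]
      grange by (simp add: inv_f_f[OF ginj])
  also have "\<dots> = (1 / col_det v g) *\<^sub>R (\<Sum>b\<in>UNIV. col_det v (g(b := e)) *\<^sub>R v (g b))"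
    by (simp add: scaleR_sum_right)
  also have "\<dots> = v e" using col_det_cramer[OF d] d by simp
  finally show ?thesis by simp
qed

end


lemma pm1_sq: "(a::real) = 1 \<or> a = -1 \<Longrightarrow> a * a = 1" by auto

context mut begin

lemma patterns:
  assumes e1: "e1 \<in> {..<n} - R"
  shows "\<exists>X Ys. simplicial n V R X \<and> simplicial n W R Ys \<and> (\<forall>c\<in>R. X c = rho e1 c \<and> Ys c = rho e1 c)
     \<and> (\<forall>e\<in>{..<n} - R. Ys e = - X e)"
proof -
  define Pe where "Pe e \<epsilon> \<longleftrightarrow> (\<epsilon> = 1 \<or> \<epsilon> = -1) \<and> (\<forall>c\<in>R. sgn (col_det V (g(inv g c := e))) = \<epsilon> * rho e1 c \<and>
            sgn (col_det W (g(inv g c := e))) = \<epsilon> * rho e1 c)" for e and \<epsilon> :: real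
  define eps where "eps e = (SOME \<epsilon>. Pe e \<epsilon>)" for e
  have epsP: "Pe e (eps e)" if "e \<in> {..<n} - R" for e
    unfolding eps_def by (rule someI_ex) (use signs[OF e1 that] in \<open>simp add: Pe_def\<close>)
  have eps: "\<forall>e\<in>{..<n} - R. (eps e = 1 \<or> eps e = -1) \<and> (\<forall>c\<in>R. sgn (col_det V (g(inv g c := e))) = eps e * rho e1 c \<and>
            sgn (col_det W (g(inv g c := e))) = eps e * rho e1 c)"
    using epsP unfolding Pe_def by blast
  define dV where "dV = sgn (col_det V g)"
  have dV: "dV = 1 \<or> dV = -1" using detg(1) by (auto simp: dV_def sgn_if)
  have dW: "sgn (col_det W g) = - dV" using detg(3) by (simp add: dV_def)
  define X where "X i = (if i \<in> R then rho e1 i else if i < n then eps i * dV else 0)" for i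
  define Ys where "Ys i = (if i \<in> R then rho e1 i else if i < n then - (eps i * dV) else 0)" for i
  have rp: "rho e1 c = 1 \<or> rho e1 c = -1" if "c \<in> R" for c using rho_pm[OF e1 that] .
  have tX: "tope n X" "tope n Ys"
  proof -
    have "X i = 1 \<or> X i = -1" "Ys i = 1 \<or> Ys i = -1" if "i < n" for i
    proof -
      have "(X i = 1 \<or> X i = -1) \<and> (Ys i = 1 \<or> Ys i = -1)"
      proof (cases "i \<in> R")
        case True thus ?thesis using rp[OF True] by (simp add: X_def Ys_def)
      next
        case False
        hence "eps i = 1 \<or> eps i = -1" using eps that by blast
        thus ?thesis using dV False that by (elim disjE) (simp_all add: X_def Ys_def)
      qed
      thus "X i = 1 \<or> X i = -1" "Ys i = 1 \<or> Ys i = -1" by blast+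
    qed
    moreover have "X i = 0" "Ys i = 0" if "n \<le> i" for i using that R(1) by (auto simp: X_def Ys_def)
    ultimately show "tope n X" "tope n Ys" unfolding tope_def by blast+
  qed
  have key: "a * b * c > 0" if "sgn a * sgn b * sgn c = 1" for a b c :: real
  proof -
    have "sgn (a * b * c) = 1" using that by (simp add: sgn_mult)
    thus ?thesis by (simp add: sgn_1_pos)
  qed
  have sV: "simplicial n V R X" unfolding simplicial_def
  proof (intro conjI exI ballI)
    show "tope n X" by (rule tX)
    fix e assume e: "e \<in> {..<n} - R"
    show "V e = (\<Sum>c\<in>R. (col_det V (g(inv g c := e)) / col_det V g) *\<^sub>R V c)" by (rule beta_eq[OF _ e]) simp
    fix c assume c: "c \<in> R"
    have epe: "eps e = 1 \<or> eps e = -1" using eps e by blast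
    have sg: "sgn (col_det V (g(inv g c := e))) = eps e * rho e1 c" using eps e c by blast
    have Xe: "X e = eps e * dV" using e by (simp add: X_def)
    have Xc: "X c = rho e1 c" using c by (simp add: X_def)
    show "X e * (col_det V (g(inv g c := e)) / col_det V g) * X c > 0"
    proof (rule key)
      show "sgn (X e) * sgn (col_det V (g(inv g c := e)) / col_det V g) * sgn (X c) = 1"
        unfolding sgn_divide sg Xe Xc dV_def[symmetric] using epe dV rp[OF c]
        by (elim disjE) (simp_all add: sgn_mult)
    qed
  qed
  have sW: "simplicial n W R Ys" unfolding simplicial_def
  proof (intro conjI exI ballI)
    show "tope n Ys" by (rule tX)
    fix e assume e: "e \<in> {..<n} - R"
    show "W e = (\<Sum>c\<in>R. (col_det W (g(inv g c := e)) / col_det W g) *\<^sub>R W c)" by (rule beta_eq[OF _ e]) simp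
    fix c assume c: "c \<in> R"
    have epe: "eps e = 1 \<or> eps e = -1" using eps e by blast
    have sg: "sgn (col_det W (g(inv g c := e))) = eps e * rho e1 c" using eps e c by blast
    have Xe: "Ys e = - (eps e * dV)" using e by (simp add: Ys_def)
    have Xc: "Ys c = rho e1 c" using c by (simp add: Ys_def)
    show "Ys e * (col_det W (g(inv g c := e)) / col_det W g) * Ys c > 0"
    proof (rule key)
      show "sgn (Ys e) * sgn (col_det W (g(inv g c := e)) / col_det W g) * sgn (Ys c) = 1"
        unfolding sgn_divide sg Xe Xc dW using epe dV rp[OF c]
        by (elim disjE) (simp_all add: sgn_mult)
    qed
  qed
  have "\<forall>c\<in>R. X c = rho e1 c \<and> Ys c = rho e1 c" by (simp add: X_def Ys_def)
  moreover have "\<forall>e\<in>{..<n} - R. Ys e = - X e" by (simp add: X_def Ys_def)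
  ultimately show ?thesis using sV sW by (intro exI[of _ X] exI[of _ Ys]) simp
qed

end


definition kone :: "nat \<Rightarrow> nat set \<Rightarrow> (nat \<Rightarrow> real) \<Rightarrow> (nat \<Rightarrow> real) set" where
  "kone n R Z = {F. svec n F \<and> (\<forall>e\<in>{..<n} - R. F e = Z e) \<and> (\<forall>c\<in>R. F c = 0 \<or> F c = Z c) \<and> (\<exists>c\<in>R. F c \<noteq> 0)}"

lemma cone_in_diff:
  fixes v1 v2 :: "nat \<Rightarrow> real^'r"
  assumes gp1: "general_position n v1" and gp2: "general_position n v2" and rn: "CARD('r) \<le> n"
    and R: "R \<subseteq> {..<n}" "card R = CARD('r)" and e0: "e0 \<in> {..<n} - R"
    and sim2: "simplicial n v2 R Z" and sim1: "simplicial n v1 R Z'"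
    and ZZ1: "\<forall>c\<in>R. Z c = Z' c" and ZZ2: "\<forall>e\<in>{..<n} - R. Z e = - Z' e"
    and F: "F \<in> kone n R Z"
  shows "F \<in> covectors n v2 - covectors n v1"
proof -
  have Fc: "svec n F" "\<forall>e\<in>{..<n} - R. F e = Z e" "\<forall>c\<in>R. F c = 0 \<or> F c = Z c" "\<exists>c\<in>R. F c \<noteq> 0"
    using F unfolding kone_def by blast+
  have in2: "F \<in> covectors n v2" by (rule SC1[OF gp2 rn R sim2 Fc])
  have tZ: "tope n Z" using sim2 by (simp add: simplicial_def)
  have cZ: "compl n F Z"
    unfolding compl_def
  proof (intro conjI allI impI tZ)
    fix i assume i: "i < n" "F i \<noteq> 0"
    show "Z i = F i"
    proof (cases "i \<in> R")
      case True thus ?thesis using Fc(3) i by metis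
    next
      case False thus ?thesis using Fc(2) i by simp
    qed
  qed
  have "F \<notin> covectors n v1"
  proof
    assume "F \<in> covectors n v1"
    hence Z1: "Z \<in> covectors n v1" using cov_compl[OF gp1 rn _ cZ] by blast
    have Rne: "R \<noteq> {}" using R(2) by auto
    then obtain c where c: "c \<in> R" by blast
    have "c < n" using c R by auto
    hence "Z c \<noteq> 0" using tZ unfolding tope_def by force
    have "\<forall>c\<in>R. Z c = 0 \<or> Z c = Z' c" using ZZ1 by blast
    moreover have "\<exists>c\<in>R. Z c \<noteq> 0" using c \<open>Z c \<noteq> 0\<close> by blast
    ultimately have "\<forall>e\<in>{..<n} - R. Z e = Z' e" using SC2[OF R(1) sim1 Z1] by blast
    hence "Z e0 = Z' e0" "Z e0 = - Z' e0" using ZZ2 e0 by blast+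
    hence "Z e0 = 0" by simp
    moreover have "e0 < n" using e0 by simp
    ultimately show False using tZ unfolding tope_def by force
  qed
  thus ?thesis using in2 by blast
qed

lemma diff_in_cone:
  fixes v1 v2 :: "nat \<Rightarrow> real^'r"
  assumes gp1: "general_position n v1" and gp2: "general_position n v2" and rn: "CARD('r) \<le> n"
    and R: "R \<subseteq> {..<n}" "card R = CARD('r)" and e0: "e0 \<in> {..<n} - R"
    and sim2: "simplicial n v2 R A"
    and new: "\<forall>T. tope n T \<and> T \<in> covectors n v2 \<and> T \<notin> covectors n v1 \<longrightarrow> T = A \<or> T = -A"
    and F: "F \<in> covectors n v2" "F \<notin> covectors n v1"
  shows "F \<in> kone n R A \<union> kone n R (-A)"
proof -
  have sF: "svec n F" by (rule cov_svec[OF F(1)])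
  have nz: "\<exists>i<n. F i \<noteq> 0" by (rule cov_nonzero[OF gp2 rn F(1)])
  obtain T where T: "compl n F T" "T \<notin> covectors n v1"
    using compl_cov[OF sF nz, of v1] F(2) by blast
  have T2: "T \<in> covectors n v2" by (rule cov_compl[OF gp2 rn F(1) T(1)])
  have tT: "tope n T" using T by (simp add: compl_def)
  have TA: "T = A \<or> T = -A" using new tT T2 T(2) by blast
  have simT: "simplicial n v2 R T" using TA sim2 simplicial_uminus by auto
  have FT: "\<forall>i<n. F i = 0 \<or> F i = T i" using T(1) by (auto simp: compl_def)
  have "F \<in> kone n R T"
  proof (cases "\<exists>c\<in>R. F c \<noteq> 0")
    case True
    have "\<forall>c\<in>R. F c = 0 \<or> F c = T c" using FT R by auto
    hence "\<forall>e\<in>{..<n} - R. F e = T e" using SC2[OF R(1) simT F(1)] True by blast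
    thus ?thesis unfolding kone_def using sF True \<open>\<forall>c\<in>R. F c = 0 \<or> F c = T c\<close> by blast
  next
    case False
    define T' where "T' i = (if i \<in> R then - T i else T i)" for i
    have cT': "compl n F T'"
      unfolding compl_def tope_def
    proof (intro conjI allI impI)
      fix i assume "i < n"
      thus "T' i = 1 \<or> T' i = -1" using tT by (auto simp: T'_def tope_def)
    next
      fix i assume "n \<le> i"
      thus "T' i = 0" using tT R by (auto simp: T'_def tope_def)
    next
      fix i assume "i < n" "F i \<noteq> 0"
      thus "T' i = F i" using False FT by (auto simp: T'_def)
    qed
    have T'2: "T' \<in> covectors n v2" by (rule cov_compl[OF gp2 rn F(1) cT'])
    have Rne: "R \<noteq> {}" using R(2) by auto
    then obtain c where c: "c \<in> R" by blast
    have "c < n" using c R by auto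
    hence "T c \<noteq> 0" using tT unfolding tope_def by force
    have "\<forall>c\<in>R. T' c = 0 \<or> T' c = (- T) c" by (simp add: T'_def)
    moreover have "\<exists>c\<in>R. T' c \<noteq> 0" using c \<open>T c \<noteq> 0\<close> by (auto simp: T'_def)
    ultimately have "\<forall>e\<in>{..<n} - R. T' e = (- T) e"
      using SC2[OF R(1) simplicial_uminus[OF simT] T'2] by blast
    hence "T' e0 = - T e0" using e0 by simp
    hence "T e0 = 0" using e0 by (simp add: T'_def)
    moreover have "e0 < n" using e0 by simp
    ultimately have False using tT unfolding tope_def by force
    thus ?thesis ..
  qed
  thus ?thesis using TA by blast
qed

lemma diff_char:
  fixes v1 v2 :: "nat \<Rightarrow> real^'r"
  assumes gp1: "general_position n v1" and gp2: "general_position n v2" and rn: "CARD('r) \<le> n"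
    and R: "R \<subseteq> {..<n}" "card R = CARD('r)" and e0: "e0 \<in> {..<n} - R"
    and sim2: "simplicial n v2 R A" and sim1: "simplicial n v1 R B"
    and AB1: "\<forall>c\<in>R. A c = B c" and AB2: "\<forall>e\<in>{..<n} - R. A e = - B e"
    and new: "\<forall>T. tope n T \<and> T \<in> covectors n v2 \<and> T \<notin> covectors n v1 \<longrightarrow> T = A \<or> T = -A"
  shows "covectors n v2 - covectors n v1 = kone n R A \<union> kone n R (-A)"
proof
  show "covectors n v2 - covectors n v1 \<subseteq> kone n R A \<union> kone n R (-A)"
    using diff_in_cone[OF gp1 gp2 rn R e0 sim2 new] by blast
  have "kone n R A \<subseteq> covectors n v2 - covectors n v1"
    using cone_in_diff[OF gp1 gp2 rn R e0 sim2 sim1 AB1 AB2] by blast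
  moreover have "kone n R (-A) \<subseteq> covectors n v2 - covectors n v1"
  proof
    fix F assume F: "F \<in> kone n R (-A)"
    have a1: "\<forall>c\<in>R. (-A) c = (-B) c" using AB1 by simp
    have a2: "\<forall>e\<in>{..<n} - R. (-A) e = - ((-B) e)" using AB2 by simp
    show "F \<in> covectors n v2 - covectors n v1"
      by (rule cone_in_diff[OF gp1 gp2 rn R e0 simplicial_uminus[OF sim2] simplicial_uminus[OF sim1] a1 a2 F])
  qed
  ultimately show "kone n R A \<union> kone n R (-A) \<subseteq> covectors n v2 - covectors n v1" by blast
qed



lemma prod_pow_count:
  assumes "finite A"
  shows "(\<Prod>c\<in>A. if Z c = (-1::real) then y else 1) = (y::real) ^ card {c\<in>A. Z c = -1}"
proof -
  have "(\<Prod>c\<in>A. if Z c = (-1::real) then y else 1) = (\<Prod>c\<in>A \<inter> {c. Z c = -1}. y) * (\<Prod>c\<in>A \<inter> - {c. Z c = -1}. 1)"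
    by (rule prod.If_cases[OF assms])
  also have "\<dots> = y ^ card (A \<inter> {c. Z c = -1})" by simp
  also have "A \<inter> {c. Z c = -1} = {c\<in>A. Z c = -1}" by blast
  finally show ?thesis .
qed

lemma kone_sum:
  fixes Z :: "nat \<Rightarrow> real" and x y :: real
  assumes R: "R \<subseteq> {..<n}" and T: "tope n Z"
  shows "(\<Sum>F\<in>kone n R Z. x ^ card {i\<in>{..<n}. F i = 0} * y ^ card {i\<in>{..<n}. F i = -1})
     = y ^ card {e\<in>{..<n} - R. Z e = -1} *
       ((x + 1) ^ card {c\<in>R. Z c = 1} * (x + y) ^ card {c\<in>R. Z c = -1} - x ^ card R)"
proof -
  have fR: "finite R" using R finite_subset by blast
  have Z1: "Z i = 1 \<or> Z i = -1" if "i < n" for i using T that by (auto simp: tope_def)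
  have Z0: "Z i = 0" if "n \<le> i" for i using T that by (auto simp: tope_def)
  define FA where "FA A = (\<lambda>i. if i \<in> R - A then 0 else Z i)" for A
  define w where "w F = x ^ card {i\<in>{..<n}. F i = 0} * y ^ card {i\<in>{..<n}. F i = -1}" for F :: "nat \<Rightarrow> real"
  define k where "k = card {e\<in>{..<n} - R. Z e = -1}"
  have img: "kone n R Z = FA ` (Pow R - {{}})"
  proof (intro set_eqI iffI)
    fix F assume F: "F \<in> kone n R Z"
    hence Fc: "svec n F" "\<forall>e\<in>{..<n} - R. F e = Z e" "\<forall>c\<in>R. F c = 0 \<or> F c = Z c" "\<exists>c\<in>R. F c \<noteq> 0"
      unfolding kone_def by blast+
    define A where "A = {c\<in>R. F c \<noteq> 0}"
    have "F = FA A"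
    proof
      fix i show "F i = FA A i"
      proof (cases "i \<in> R")
        case True thus ?thesis using Fc(3) by (auto simp: FA_def A_def)
      next
        case False
        show ?thesis
        proof (cases "i < n")
          case True thus ?thesis using Fc(2) False by (simp add: FA_def)
        next
          case f2: False thus ?thesis using Fc(1) Z0 False by (simp add: FA_def svec_def)
        qed
      qed
    qed
    moreover have "A \<in> Pow R - {{}}" using Fc(4) by (auto simp: A_def)
    ultimately show "F \<in> FA ` (Pow R - {{}})" by blast
  next
    fix F assume "F \<in> FA ` (Pow R - {{}})"
    then obtain A where A: "A \<subseteq> R" "A \<noteq> {}" "F = FA A" by blast
    have "svec n F" unfolding svec_def
    proof (intro conjI allI impI)
      fix i assume "i < n" thus "F i = 1 \<or> F i = 0 \<or> F i = -1" using Z1 by (auto simp: A FA_def)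
    next
      fix i assume "n \<le> i" thus "F i = 0" using Z0 by (auto simp: A FA_def)
    qed
    moreover have "\<forall>e\<in>{..<n} - R. F e = Z e" by (simp add: A FA_def)
    moreover have "\<forall>c\<in>R. F c = 0 \<or> F c = Z c" by (simp add: A FA_def)
    moreover have "\<exists>c\<in>R. F c \<noteq> 0"
    proof -
      obtain c where c: "c \<in> A" using A by blast
      hence "c < n" using A R by auto
      hence "Z c \<noteq> 0" using Z1 by force
      thus ?thesis using c A by (auto simp: FA_def)
    qed
    ultimately show "F \<in> kone n R Z" unfolding kone_def by blast
  qed
  have inj: "inj_on FA (Pow R)"
  proof (rule inj_onI)
    fix A B assume AB: "A \<in> Pow R" "B \<in> Pow R" "FA A = FA B"
    have nz: "Z c \<noteq> 0" if "c \<in> R" for c using that R Z1 by force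
    show "A = B"
    proof (intro set_eqI iffI)
      fix c assume c: "c \<in> A"
      have e: "FA A c = FA B c" using AB(3) by simp
      have "FA A c \<noteq> 0" using c AB(1,2) nz by (auto simp: FA_def)
      thus "c \<in> B" using e c AB(1,2) nz by (auto simp: FA_def split: if_splits)
    next
      fix c assume c: "c \<in> B"
      have e: "FA A c = FA B c" using AB(3) by simp
      have "FA B c \<noteq> 0" using c AB(1,2) nz by (auto simp: FA_def)
      thus "c \<in> A" using e c AB(1,2) nz by (auto simp: FA_def split: if_splits)
    qed
  qed
  have wA: "w (FA A) = y ^ k * (x ^ card (R - A) * y ^ card {c\<in>A. Z c = -1})" if A: "A \<subseteq> R" for A
  proof -
    have z: "{i\<in>{..<n}. FA A i = 0} = R - A"
    proof (intro set_eqI iffI)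
      fix i assume i: "i \<in> {i\<in>{..<n}. FA A i = 0}"
      hence "Z i \<noteq> 0" using Z1[of i] by auto
      thus "i \<in> R - A" using i by (auto simp: FA_def split: if_splits)
    next
      fix i assume "i \<in> R - A" thus "i \<in> {i\<in>{..<n}. FA A i = 0}" using R by (auto simp: FA_def)
    qed
    have m: "{i\<in>{..<n}. FA A i = -1} = {c\<in>A. Z c = -1} \<union> {e\<in>{..<n} - R. Z e = -1}"
      using A R by (auto simp: FA_def)
    have "card {i\<in>{..<n}. FA A i = -1} = card {c\<in>A. Z c = -1} + k"
      unfolding m k_def by (rule card_Un_disjoint) (use A fR in \<open>auto intro: finite_subset\<close>)
    thus ?thesis unfolding w_def z by (simp add: power_add)
  qed
  have "(\<Sum>F\<in>kone n R Z. w F) = (\<Sum>A\<in>Pow R - {{}}. w (FA A))"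
    unfolding img by (rule sum.reindex[OF inj_on_subset[OF inj], unfolded comp_def]) blast
  also have "\<dots> = (\<Sum>A\<in>Pow R. w (FA A)) - w (FA {})"
    using fR by (simp add: sum_diff1)
  also have "(\<Sum>A\<in>Pow R. w (FA A)) = y ^ k * (\<Sum>A\<in>Pow R. (\<Prod>c\<in>A. if Z c = -1 then y else 1) * (\<Prod>c\<in>R - A. x))"
    by (simp add: wA sum_distrib_left prod_pow_count finite_subset[OF _ fR] mult.commute)
  also have "(\<Sum>A\<in>Pow R. (\<Prod>c\<in>A. if Z c = -1 then y else 1) * (\<Prod>c\<in>R - A. x)) = (\<Prod>c\<in>R. (if Z c = -1 then y else 1) + x)"
    by (rule prod_add[OF fR, symmetric])
  also have "\<dots> = (\<Prod>c\<in>R \<inter> {c. Z c = -1}. y + x) * (\<Prod>c\<in>R \<inter> - {c. Z c = -1}. 1 + x)"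
    by (subst prod.If_cases[OF fR, symmetric]) (rule prod.cong, auto)
  also have "\<dots> = (x + y) ^ card {c\<in>R. Z c = -1} * (x + 1) ^ card {c\<in>R. Z c = 1}"
  proof -
    have "R \<inter> {c. Z c = -1} = {c\<in>R. Z c = -1}" by blast
    moreover have "R \<inter> - {c. Z c = -1} = {c\<in>R. Z c = 1}" using Z1 R by force
    ultimately show ?thesis by (simp add: add.commute)
  qed
  also have "w (FA {}) = y ^ k * x ^ card R" using wA[of "{}"] by simp
  finally show ?thesis unfolding w_def[symmetric] k_def[symmetric] by (simp add: algebra_simps)
qed



lemma card_pm_split:
  assumes "finite S" "\<forall>i\<in>S. Y i = (1::real) \<or> Y i = -1"
  shows "card {i\<in>S. Y i = 1} = card S - card {i\<in>S. Y i = -1}"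
proof -
  have "S = {i\<in>S. Y i = 1} \<union> {i\<in>S. Y i = -1}" using assms by auto
  moreover have "card ({i\<in>S. Y i = 1} \<union> {i\<in>S. Y i = -1}) = card {i\<in>S. Y i = 1} + card {i\<in>S. Y i = -1}"
    by (rule card_Un_disjoint) (use assms(1) in auto)
  ultimately have "card S = card {i\<in>S. Y i = 1} + card {i\<in>S. Y i = -1}" by simp
  thus ?thesis by simp
qed

theorem lemma3p1:
  fixes n :: nat and V W :: "nat \<Rightarrow> real^'r"
    and P :: "real \<Rightarrow> nat \<Rightarrow> real^'r" and t0 :: real and R :: "nat set"
    and Y :: "nat \<Rightarrow> real" and j k :: nat
  assumes "CARD('r) \<le> n"
    and "general_position n V" and "general_position n W"
    and "mutation_via n V W P t0 R"
    and "\<forall>i<n. Y i = 1 \<or> Y i = -1" and "\<forall>i\<ge>n. Y i = 0"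
    and "{F \<in> covectors n W - covectors n V. \<forall>i<n. F i = 1 \<or> F i = -1} = {Y, - Y}"
    and "j = card (R \<inter> {i\<in>{..<n}. Y i = -1})"
    and "k = card ({i\<in>{..<n}. Y i = -1} - R)"
  shows "\<forall>x y::real. fpoly n W x y - fpoly n V x y =
           (y ^ k - y ^ (n - CARD('r) - k)) *
           ((x + 1) ^ (CARD('r) - j) * (x + y) ^ j - (x + 1) ^ j * (x + y) ^ (CARD('r) - j))"
proof (intro allI)
  fix x y :: real
  interpret m: mut n V W P t0 R by (rule mut.intro) (rule assms)+
  have rn: "CARD('r) \<le> n" and gpV: "general_position n V" and gpW: "general_position n W"
    by (rule assms(1), rule assms(2), rule assms(3))
  have R: "R \<subseteq> {..<n}" "card R = CARD('r)" using m.R by blast+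
  have fR: "finite R" by (rule m.fR)
  have tY: "tope n Y" using assms(5,6) by (simp add: tope_def)
  have Yset: "Y \<in> {F \<in> covectors n W - covectors n V. \<forall>i<n. F i = 1 \<or> F i = -1}"
    "- Y \<in> {F \<in> covectors n W - covectors n V. \<forall>i<n. F i = 1 \<or> F i = -1}"
    by (subst assms(7), simp)+
  have YW: "Y \<in> covectors n W" "Y \<notin> covectors n V" using Yset(1) by blast+
  have Y1: "Y i = 1 \<or> Y i = -1" if "i < n" for i using assms(5) that by blast
  obtain e0 where e0: "e0 \<in> {..<n} - R"
  proof (cases "{..<n} - R = {}")
    case True
    hence NR: "{..<n} = R" using R by blast
    obtain u where u: "\<forall>i\<in>{..<n}. inner (V i) u = Y i"
      using gp_solve[OF gpV rn, of "{..<n}" Y] rn NR R by auto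
    have n0: "0 < n" using rn by (rule n_pos)
    have "u \<noteq> 0" using u n0 Y1[OF n0] by auto
    moreover have "\<forall>i<n. Y i = sgn (inner (V i) u)"
    proof (intro allI impI)
      fix i assume i: "i < n"
      show "Y i = sgn (inner (V i) u)" using u i Y1[OF i] by auto
    qed
    ultimately have "Y \<in> covectors n V" using assms(6) by (intro covI) auto
    thus ?thesis using YW by blast
  next
    case False thus ?thesis using that by blast
  qed
  obtain X Ys where XY: "simplicial n V R X" "simplicial n W R Ys"
    "\<forall>c\<in>R. X c = m.rho e0 c \<and> Ys c = m.rho e0 c" "\<forall>e\<in>{..<n} - R. Ys e = - X e"
    using m.patterns[OF e0] by blast
  have tX: "tope n X" "tope n Ys" using XY by (auto simp: simplicial_def)
  have Rne: "R \<noteq> {}" using R(2) by auto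
  then obtain c1 where c1: "c1 \<in> R" by blast
  have rho_nz: "m.rho e0 c \<noteq> 0" if "c \<in> R" for c using m.rho_pm[OF e0 that] by auto
  define Xh where "Xh i = (if i \<in> R then - Y i else Y i)" for i
  have simYX: "simplicial n W R Y \<and> (Xh = X \<or> Xh = - X)"
  proof -
    have "(\<forall>c\<in>R. Y c = m.rho e0 c) \<or> (\<forall>c\<in>R. Y c = - m.rho e0 c)"
      by (rule m.tope_change[OF e0 _ tY YW]) simp
    thus ?thesis
    proof
      assume a: "\<forall>c\<in>R. Y c = m.rho e0 c"
      have "\<forall>c\<in>R. Y c = 0 \<or> Y c = Ys c" using a XY(3) by simp
      moreover have "\<exists>c\<in>R. Y c \<noteq> 0" using a c1 rho_nz by auto
      ultimately have off: "\<forall>e\<in>{..<n} - R. Y e = Ys e" using SC2[OF R(1) XY(2) YW(1)] by blast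
      have YYs: "Y = Ys"
      proof
        fix i show "Y i = Ys i"
          using a XY(3) off assms(6) tX(2) by (cases "i \<in> R"; cases "i < n") (auto simp: tope_def)
      qed
      have XhX: "Xh = - X"
      proof
        fix i show "Xh i = (- X) i"
          using a XY(3,4) off assms(6) tX(1) by (cases "i \<in> R"; cases "i < n") (auto simp: tope_def Xh_def)
      qed
      show ?thesis using XY(2) YYs XhX by simp
    next
      assume a: "\<forall>c\<in>R. Y c = - m.rho e0 c"
      have "\<forall>c\<in>R. Y c = 0 \<or> Y c = (- Ys) c" using a XY(3) by simp
      moreover have "\<exists>c\<in>R. Y c \<noteq> 0" using a c1 rho_nz by auto
      ultimately have off: "\<forall>e\<in>{..<n} - R. Y e = (- Ys) e"
        using SC2[OF R(1) simplicial_uminus[OF XY(2)] YW(1)] by blast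
      have YYs: "Y = - Ys"
      proof
        fix i show "Y i = (- Ys) i"
          using a XY(3) off assms(6) tX(2) by (cases "i \<in> R"; cases "i < n") (auto simp: tope_def)
      qed
      have XhX: "Xh = X"
      proof
        fix i show "Xh i = X i"
          using a XY(3,4) off assms(6) tX(1) by (cases "i \<in> R"; cases "i < n") (auto simp: tope_def Xh_def)
      qed
      show ?thesis using simplicial_uminus[OF XY(2)] YYs XhX by simp
    qed
  qed
  have simY: "simplicial n W R Y" and XhX: "Xh = X \<or> Xh = - X" using simYX by blast+
  have simXh: "simplicial n V R Xh" using XhX XY(1) simplicial_uminus[OF XY(1)] by auto
  have lost: "\<forall>T. tope n T \<and> T \<in> covectors n V \<and> T \<notin> covectors n W \<longrightarrow> T = Xh \<or> T = - Xh"
  proof (intro allI impI)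
    fix T assume T: "tope n T \<and> T \<in> covectors n V \<and> T \<notin> covectors n W"
    have "(\<forall>c\<in>R. T c = m.rho e0 c) \<or> (\<forall>c\<in>R. T c = - m.rho e0 c)"
      by (rule m.tope_change[OF e0, of W V]) (use T in auto)
    hence "T = X \<or> T = - X"
    proof
      assume a: "\<forall>c\<in>R. T c = m.rho e0 c"
      have "\<forall>c\<in>R. T c = 0 \<or> T c = X c" using a XY(3) by simp
      moreover have "\<exists>c\<in>R. T c \<noteq> 0" using a c1 rho_nz by auto
      ultimately have off: "\<forall>e\<in>{..<n} - R. T e = X e" using SC2[OF R(1) XY(1)] T by blast
      have "T = X"
      proof
        fix i show "T i = X i"
          using a XY(3) off T tX(1) by (cases "i \<in> R"; cases "i < n") (auto simp: tope_def)
      qed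
      thus ?thesis ..
    next
      assume a: "\<forall>c\<in>R. T c = - m.rho e0 c"
      have "\<forall>c\<in>R. T c = 0 \<or> T c = (- X) c" using a XY(3) by simp
      moreover have "\<exists>c\<in>R. T c \<noteq> 0" using a c1 rho_nz by auto
      ultimately have off: "\<forall>e\<in>{..<n} - R. T e = (- X) e"
        using SC2[OF R(1) simplicial_uminus[OF XY(1)]] T by blast
      have "T = - X"
      proof
        fix i show "T i = (- X) i"
          using a XY(3) off T tX(1) by (cases "i \<in> R"; cases "i < n") (auto simp: tope_def)
      qed
      thus ?thesis ..
    qed
    thus "T = Xh \<or> T = - Xh" using XhX by auto
  qed
  have G: "covectors n W - covectors n V = kone n R Y \<union> kone n R (- Y)"
  proof (rule diff_char[OF gpV gpW rn R e0 simY simplicial_uminus[OF simXh]])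
    show "\<forall>c\<in>R. Y c = (- Xh) c" by (simp add: Xh_def)
    show "\<forall>e\<in>{..<n} - R. Y e = - (- Xh) e" by (simp add: Xh_def)
    show "\<forall>T. tope n T \<and> T \<in> covectors n W \<and> T \<notin> covectors n V \<longrightarrow> T = Y \<or> T = - Y"
    proof (intro allI impI)
      fix T assume "tope n T \<and> T \<in> covectors n W \<and> T \<notin> covectors n V"
      hence "T \<in> {F \<in> covectors n W - covectors n V. \<forall>i<n. F i = 1 \<or> F i = -1}"
        by (auto simp: tope_def)
      thus "T = Y \<or> T = - Y" using assms(7) by blast
    qed
  qed
  have L: "covectors n V - covectors n W = kone n R Xh \<union> kone n R (- Xh)"
  proof (rule diff_char[OF gpW gpV rn R e0 simXh simplicial_uminus[OF simY] _ _ lost])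
    show "\<forall>c\<in>R. Xh c = (- Y) c" by (simp add: Xh_def)
    show "\<forall>e\<in>{..<n} - R. Xh e = - (- Y) e" by (simp add: Xh_def)
  qed
  show "fpoly n W x y - fpoly n V x y =
           (y ^ k - y ^ (n - CARD('r) - k)) *
           ((x + 1) ^ (CARD('r) - j) * (x + y) ^ j - (x + 1) ^ j * (x + y) ^ (CARD('r) - j))"
  proof -
    define w where "w F = x ^ card {i\<in>{..<n}. F i = 0} * y ^ card {i\<in>{..<n}. F i = -1}" for F :: "nat \<Rightarrow> real"
    have fp: "fpoly n v x y = sum w (covectors n v)" for v :: "nat \<Rightarrow> real^'r"
      by (simp add: fpoly_def w_def)
    have fin: "finite (covectors n v)" for v :: "nat \<Rightarrow> real^'r"
    proof (rule finite_subset)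
      show "covectors n v \<subseteq> {F. \<forall>i. (i \<in> {..<n} \<longrightarrow> F i \<in> {-1,0,1}) \<and> (i \<notin> {..<n} \<longrightarrow> F i = 0)}"
      proof
        fix F assume "F \<in> covectors n v"
        hence "svec n F" by (rule cov_svec)
        thus "F \<in> {F. \<forall>i. (i \<in> {..<n} \<longrightarrow> F i \<in> {-1,0,1}) \<and> (i \<notin> {..<n} \<longrightarrow> F i = 0)}"
          unfolding svec_def by auto
      qed
      show "finite {F. \<forall>i. (i \<in> {..<n} \<longrightarrow> F i \<in> {-1,0,1::real}) \<and> (i \<notin> {..<n} \<longrightarrow> F i = 0)}"
        by (rule finite_set_of_finite_funs) simp_all
    qed
    have d1: "sum w (covectors n W) = sum w (covectors n W \<inter> covectors n V) + sum w (covectors n W - covectors n V)"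
      by (rule sum.Int_Diff[OF fin])
    have d2: "sum w (covectors n V) = sum w (covectors n V \<inter> covectors n W) + sum w (covectors n V - covectors n W)"
      by (rule sum.Int_Diff[OF fin])
    have diff: "fpoly n W x y - fpoly n V x y = sum w (covectors n W - covectors n V) - sum w (covectors n V - covectors n W)"
      unfolding fp d1 d2 by (simp add: Int_commute)
    have disj: "kone n R Z \<inter> kone n R (- Z) = {}" if "tope n Z" for Z
    proof -
      have "Z e0 \<noteq> 0" using that e0 by (auto simp: tope_def)
      thus ?thesis using e0 by (auto simp: kone_def)
    qed
    have tmY: "tope n (- Y)" and tXh: "tope n Xh" and tmXh: "tope n (- Xh)"
      using simplicial_uminus[OF simY] simXh simplicial_uminus[OF simXh] by (auto simp: simplicial_def)
    have finG: "finite (kone n R Y)" "finite (kone n R (- Y))"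
      using G finite_subset[OF _ fin[of W]] by blast+
    have finL: "finite (kone n R Xh)" "finite (kone n R (- Xh))"
      using L finite_subset[OF _ fin[of V]] by blast+
    have sG: "sum w (covectors n W - covectors n V) = sum w (kone n R Y) + sum w (kone n R (- Y))"
      unfolding G by (rule sum.union_disjoint[OF finG disj[OF tY]])
    have sL: "sum w (covectors n V - covectors n W) = sum w (kone n R Xh) + sum w (kone n R (- Xh))"
      unfolding L by (rule sum.union_disjoint[OF finL disj[OF tXh]])
    have ks: "sum w (kone n R Z) = y ^ card {e\<in>{..<n} - R. Z e = -1} *
       ((x + 1) ^ card {c\<in>R. Z c = 1} * (x + y) ^ card {c\<in>R. Z c = -1} - x ^ card R)" if "tope n Z" for Z
      unfolding w_def by (rule kone_sum[OF R(1) that])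
    define r where "r = CARD('r)"
    have YR: "\<forall>i\<in>R. Y i = 1 \<or> Y i = -1" using R Y1 by auto
    have YNR: "\<forall>i\<in>{..<n} - R. Y i = 1 \<or> Y i = -1" using Y1 by auto
    have hk: "card {e\<in>{..<n} - R. Y e = -1} = k"
    proof -
      have "{e\<in>{..<n} - R. Y e = -1} = {i\<in>{..<n}. Y i = -1} - R" by blast
      thus ?thesis using assms(9) by simp
    qed
    have hj: "card {c\<in>R. Y c = -1} = j"
    proof -
      have "{c\<in>R. Y c = -1} = R \<inter> {i\<in>{..<n}. Y i = -1}" using R by blast
      thus ?thesis using assms(8) by simp
    qed
    have hj': "card {c\<in>R. Y c = 1} = r - j" using card_pm_split[OF fR YR] hj R by (simp add: r_def)
    have cNR: "card ({..<n} - R) = n - r" using R fR by (simp add: card_Diff_subset r_def)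
    have hk': "card {e\<in>{..<n} - R. Y e = 1} = n - r - k" using card_pm_split[OF _ YNR] hk cNR by simp
    have e1: "{e\<in>{..<n} - R. (- Y) e = -1} = {e\<in>{..<n} - R. Y e = 1}" by auto
    have e2: "{c\<in>R. (- Y) c = 1} = {c\<in>R. Y c = -1}" by (auto simp: minus_equation_iff)
    have e3: "{c\<in>R. (- Y) c = -1} = {c\<in>R. Y c = 1}" by auto
    have e4: "{e\<in>{..<n} - R. Xh e = -1} = {e\<in>{..<n} - R. Y e = -1}" by (auto simp: Xh_def)
    have e5: "{c\<in>R. Xh c = 1} = {c\<in>R. Y c = -1}" by (auto simp: Xh_def minus_equation_iff)
    have e6: "{c\<in>R. Xh c = -1} = {c\<in>R. Y c = 1}" by (auto simp: Xh_def)
    have e7: "{e\<in>{..<n} - R. (- Xh) e = -1} = {e\<in>{..<n} - R. Y e = 1}" by (auto simp: Xh_def)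
    have e8: "{c\<in>R. (- Xh) c = 1} = {c\<in>R. Y c = 1}" by (auto simp: Xh_def)
    have e9: "{c\<in>R. (- Xh) c = -1} = {c\<in>R. Y c = -1}" by (auto simp: Xh_def minus_equation_iff)
    have jr: "j \<le> r" using hj R card_mono[OF fR, of "{c\<in>R. Y c = -1}"] by (auto simp: r_def)
    have rr: "r - (r - j) = j" using jr by simp
    have cR: "card R = r" using R by (simp add: r_def)
    have "fpoly n W x y - fpoly n V x y =
      (y ^ k * ((x + 1) ^ (r - j) * (x + y) ^ j - x ^ r) + y ^ (n - r - k) * ((x + 1) ^ j * (x + y) ^ (r - j) - x ^ r))
    - (y ^ k * ((x + 1) ^ j * (x + y) ^ (r - j) - x ^ r) + y ^ (n - r - k) * ((x + 1) ^ (r - j) * (x + y) ^ j - x ^ r))"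
      unfolding diff sG sL ks[OF tY] ks[OF tmY] ks[OF tXh] ks[OF tmXh] e1 e2 e3 e4 e5 e6 e7 e8 e9 hk hj hj' hk' cR
      by simp
    also have "\<dots> = (y ^ k - y ^ (n - r - k)) * ((x + 1) ^ (r - j) * (x + y) ^ j - (x + 1) ^ j * (x + y) ^ (r - j))"
      by (simp add: algebra_simps)
    finally show ?thesis by (simp add: r_def)
  qed
qed



end
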